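(* Let $\alpha_0=(X_0,\beta_0,\tau_0)$ be a non-saturated pre-action of $\Gamma=\mathrm{BS}(m,n)$, let $x\in X_0$, and let $\alpha$ be a one orbit free $\mathtt r$-extension of $(\alpha_0,x)$ (for some transfer rule $\mathtt r$), with new $\beta$-orbit containing the chosen point $y$, of cardinality $L_y$. Let $\varepsilon=1$ if the extension is positive and $\varepsilon=-1$ if negative. Let $x_0\in X_0$ lie in the same connected component of $\mathrm{Sch}(\alpha_0)$ as $x$, and let $c$ be any path from $x_0$ to $x$ in $\mathrm{Sch}(\alpha_0)$. Then: (1) if $L_y<\infty$, $\mathrm{Stab}_\alpha(x_0)=\langle\mathrm{Stab}_{\alpha_0}(x_0),\ \Psi(c)\,t^{\varepsilon}b^{L_y}t^{-\varepsilon}\,\Psi(c)^{-1}\rangle$; (2) if $L_y=\infty$, or if the extension is maximal (i.e. $L_y=|m|L_x/\gcd(L_x,n)$ when positive and $L_y=|n|L_x/\gcd(L_x,m)$ when negative, where $L_x=|x\langle\beta_0\rangle|$), then $\mathrm{Stab}_\alpha(x_0)=\mathrm{Stab}_{\alpha_0}(x_0)$.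
   Context: $\mathrm{BS}(m,n)=\langle b,t\mid tb^mt^{-1}=b^n\rangle$, $|m|,|n|\ge2$; maps act on the right. A pre-action is $(X,\beta,\tau)$ with $\beta$ a bijection of $X$, $\tau$ a partial bijection with $\beta^n$-invariant domain, $\beta^m$-invariant range, and $x\tau\beta^m=x\beta^n\tau$ on $\mathrm{dom}(\tau)$; saturated means $\mathrm{dom}(\tau)=\mathrm{rng}(\tau)=X$. Its Schreier graph $\mathrm{Sch}(\alpha)$ has vertex set $X$, a $b$-labelled edge $x\to x\beta$ (with opposite $b^{-1}$-edge) for all $x$, and a $t$-labelled edge $x\to x\tau$ (with opposite $t^{-1}$-edge) for $x\in\mathrm{dom}(\tau)$. For a path $c$, $\Psi(c)\in\Gamma$ is the element represented by the word read along $c$ (so the endpoint of $c$ is the start point acted on by $\Psi(c)$). $\mathrm{Stab}_\alpha(x_0)$ is the image of $\pi_1(\mathrm{Sch}(\alpha),x_0)$ under $\Psi$. Transfer rule: a map $\mathtt r:(\mathbb{Z}_{\ge1}\cup\{\infty\})\times\{\pm\}\to\mathbb{Z}_{\ge1}\cup\{\infty\}$ with $L'=\mathtt r(L,\epsilon)$ satisfying $L/\gcd(L,n)=L'/\gcd(L',m)$ if $\epsilon=+$, $L/\gcd(L,m)=L'/\gcd(L',n)$ if $\epsilon=-$ ($\gcd(\infty,k)=|k|$; infinite on one side means infinite on both). One orbit free $\mathtt r$-extension of $(\alpha_0,x)$, $L=|x\langle\beta_0\rangle|$: positive (if $x\notin\mathrm{dom}(\tau_0)$): adjoin a new set $O'$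 of size $L'=\mathtt r(L,+)$ carrying a transitive permutation $\beta'$ (an $L'$-cycle, or a $\mathbb{Z}$-translation if infinite), pick $y\in O'$, extend $\beta_0$ by $\beta'$ and $\tau_0$ by $x\beta_0^{jn}\mapsto y\beta'^{jm}$ ($j\in\mathbb{Z}$); negative (if $x\notin\mathrm{rng}(\tau_0)$): same with $L'=\mathtt r(L,-)$ and $\tau_0$ extended by $y\beta'^{jn}\mapsto x\beta_0^{jm}$. *)

theory Defs
  imports "HOL-Algebra.Generated_Groups" "HOL-Library.Extended_Nat"
begin

datatype gen = B | T

text \<open>Words over the symmetric generating set: (g, True) is g, (g, False) is g^-1.\<close>
type_synonym word = "(gen \<times> bool) list"

definition gpow :: "gen \<Rightarrow> int \<Rightarrow> word" where
  "gpow g k = replicate (nat \<bar>k\<bar>) (g, k \<ge> 0)"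

inductive_set bs_rel :: "int \<Rightarrow> int \<Rightarrow> (word \<times> word) set" for m n where
  refl: "(w, w) \<in> bs_rel m n"
| sym: "(u, v) \<in> bs_rel m n \<Longrightarrow> (v, u) \<in> bs_rel m n"
| trans: "(u, v) \<in> bs_rel m n \<Longrightarrow> (v, w) \<in> bs_rel m n \<Longrightarrow> (u, w) \<in> bs_rel m n"
| cong: "(u, v) \<in> bs_rel m n \<Longrightarrow> (p @ u @ q, p @ v @ q) \<in> bs_rel m n"
| cancel: "([(g, s), (g, \<not> s)], []) \<in> bs_rel m n"
| relator: "([(T, True)] @ gpow B m @ [(T, False)], gpow B n) \<in> bs_rel m n"

definition gcls :: "int \<Rightarrow> int \<Rightarrow> word \<Rightarrow> word set" where
  "gcls m n w = bs_rel m n `` {w}"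

definition BS :: "int \<Rightarrow> int \<Rightarrow> word set monoid" where
  "BS m n = \<lparr> carrier = UNIV // bs_rel m n,
              monoid.mult = (\<lambda>P Q. \<Union>u\<in>P. \<Union>v\<in>Q. gcls m n (u @ v)),
              one = gcls m n [] \<rparr>"

section \<open>Pre-actions (maps act on the right)\<close>

definition bpow :: "'a set \<Rightarrow> ('a \<Rightarrow> 'a) \<Rightarrow> int \<Rightarrow> 'a \<Rightarrow> 'a" where
  "bpow A f k = (if k \<ge> 0 then f ^^ nat k else inv_into A f ^^ nat (- k))"

definition borbit :: "'a set \<Rightarrow> ('a \<Rightarrow> 'a) \<Rightarrow> 'a \<Rightarrow> 'a set" where
  "borbit A f z = {bpow A f k z | k. True}"

definition ecard :: "'a set \<Rightarrow> enat" where
  "ecard A = (if finite A then enat (card A) else \<infinity>)"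

definition pre_action :: "int \<Rightarrow> int \<Rightarrow> 'a set \<Rightarrow> ('a \<Rightarrow> 'a) \<Rightarrow> ('a \<rightharpoonup> 'a) \<Rightarrow> bool" where
  "pre_action m n X \<beta> \<tau> \<longleftrightarrow>
     bij_betw \<beta> X X \<and> dom \<tau> \<subseteq> X \<and> ran \<tau> \<subseteq> X \<and> inj_on \<tau> (dom \<tau>) \<and>
     bpow X \<beta> n ` dom \<tau> = dom \<tau> \<and> bpow X \<beta> m ` ran \<tau> = ran \<tau> \<and>
     (\<forall>z \<in> dom \<tau>. \<tau> (bpow X \<beta> n z) = map_option (bpow X \<beta> m) (\<tau> z))"

definition saturated :: "'a set \<Rightarrow> ('a \<rightharpoonup> 'a) \<Rightarrow> bool" where
  "saturated X \<tau> \<longleftrightarrow> dom \<tau> = X \<and> ran \<tau> = X"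

section \<open>Schreier graph: paths are determined by start point and label word\<close>

fun step :: "'a set \<Rightarrow> ('a \<Rightarrow> 'a) \<Rightarrow> ('a \<rightharpoonup> 'a) \<Rightarrow> 'a \<Rightarrow> gen \<times> bool \<Rightarrow> 'a option" where
  "step X \<beta> \<tau> z (B, True) = (if z \<in> X then Some (\<beta> z) else None)"
| "step X \<beta> \<tau> z (B, False) = (if z \<in> X then Some (inv_into X \<beta> z) else None)"
| "step X \<beta> \<tau> z (T, True) = \<tau> z"
| "step X \<beta> \<tau> z (T, False) = (if z \<in> ran \<tau> then Some (THE u. \<tau> u = Some z) else None)"

fun follow :: "'a set \<Rightarrow> ('a \<Rightarrow> 'a) \<Rightarrow> ('a \<rightharpoonup> 'a) \<Rightarrow> 'a \<Rightarrow> word \<Rightarrow> 'a option" where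
  "follow X \<beta> \<tau> z [] = Some z"
| "follow X \<beta> \<tau> z (l # w) =
     (case step X \<beta> \<tau> z l of None \<Rightarrow> None | Some z' \<Rightarrow> follow X \<beta> \<tau> z' w)"

text \<open>Stab(x0) = \<Psi>(\<pi>_1(Sch, x0)): elements read along closed paths at x0.\<close>
definition Stab :: "int \<Rightarrow> int \<Rightarrow> 'a set \<Rightarrow> ('a \<Rightarrow> 'a) \<Rightarrow> ('a \<rightharpoonup> 'a) \<Rightarrow> 'a \<Rightarrow> word set set" where
  "Stab m n X \<beta> \<tau> x0 = {gcls m n w | w. follow X \<beta> \<tau> x0 w = Some x0}"

text \<open>Sign: True = +, False = -. gcd(\<infinity>,k) = |k|, so infinite on one side iff on the other.\<close>
definition transfer_rule :: "int \<Rightarrow> int \<Rightarrow> (enat \<Rightarrow> bool \<Rightarrow> enat) \<Rightarrow> bool" where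
  "transfer_rule m n r \<longleftrightarrow>
     (\<forall>L s. L \<ge> 1 \<longrightarrow> r L s \<ge> 1 \<and> (L = \<infinity> \<longleftrightarrow> r L s = \<infinity>) \<and>
        (\<forall>a b. L = enat a \<longrightarrow> r L s = enat b \<longrightarrow>
           (if s then int a div gcd (int a) n = int b div gcd (int b) m
                 else int a div gcd (int a) m = int b div gcd (int b) n)))"

definition one_orbit_free_ext ::
  "int \<Rightarrow> int \<Rightarrow> (enat \<Rightarrow> bool \<Rightarrow> enat) \<Rightarrow> 'a set \<Rightarrow> ('a \<Rightarrow> 'a) \<Rightarrow> ('a \<rightharpoonup> 'a) \<Rightarrow> 'a \<Rightarrow>
   'a set \<Rightarrow> ('a \<Rightarrow> 'a) \<Rightarrow> ('a \<rightharpoonup> 'a) \<Rightarrow> 'a set \<Rightarrow> 'a \<Rightarrow> bool \<Rightarrow> bool" where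
  "one_orbit_free_ext m n r X0 \<beta>0 \<tau>0 x X \<beta> \<tau> Y y s \<longleftrightarrow>
     x \<in> X0 \<and> Y \<inter> X0 = {} \<and> y \<in> Y \<and> bij_betw \<beta> Y Y \<and> Y = borbit Y \<beta> y \<and>
     ecard Y = r (ecard (borbit X0 \<beta>0 x)) s \<and>
     X = X0 \<union> Y \<and> (\<forall>z \<in> X0. \<beta> z = \<beta>0 z) \<and> (\<forall>z \<in> dom \<tau>0. \<tau> z = \<tau>0 z) \<and>
     (if s then
        x \<notin> dom \<tau>0 \<and>
        dom \<tau> = dom \<tau>0 \<union> {bpow X0 \<beta>0 (j * n) x | j. True} \<and>
        (\<forall>j. \<tau> (bpow X0 \<beta>0 (j * n) x) = Some (bpow Y \<beta> (j * m) y))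
      else
        x \<notin> ran \<tau>0 \<and>
        dom \<tau> = dom \<tau>0 \<union> {bpow Y \<beta> (j * n) y | j. True} \<and>
        (\<forall>j. \<tau> (bpow Y \<beta> (j * n) y) = Some (bpow X0 \<beta>0 (j * m) x)))"

definition maximal_ext :: "int \<Rightarrow> int \<Rightarrow> bool \<Rightarrow> enat \<Rightarrow> enat \<Rightarrow> bool" where
  "maximal_ext m n s Lx Ly \<longleftrightarrow>
     (Lx = \<infinity> \<and> Ly = \<infinity>) \<or>
     (\<exists>a. Lx = enat a \<and>
        (if s then Ly = enat (nat (\<bar>m\<bar> * int a div gcd (int a) n))
              else Ly = enat (nat (\<bar>n\<bar> * int a div gcd (int a) m))))"

definition tword :: "bool \<Rightarrow> nat \<Rightarrow> word" where
  "tword s L = [(T, s)] @ replicate L (B, True) @ [(T, \<not> s)]"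

end

theory Submission
  imports Defs
begin

lemma bs_refl[simp]: "(w,w) \<in> bs_rel m n" by (rule bs_rel.refl)

lemma equiv_bs: "equiv UNIV (bs_rel m n)"
proof (rule equivI)
  show "bs_rel m n \<subseteq> UNIV \<times> UNIV" by simp
  show "refl_on UNIV (bs_rel m n)" unfolding refl_on_def by auto
  show "sym (bs_rel m n)" by (rule symI) (rule bs_rel.sym)
  show "trans (bs_rel m n)" by (rule transI) (rule bs_rel.trans)
qed

lemma gcls_eq_iff: "gcls m n u = gcls m n v \<longleftrightarrow> (u, v) \<in> bs_rel m n"
  unfolding gcls_def using equiv_class_eq_iff[OF equiv_bs] by auto

lemma bs_app: "(u,u') \<in> bs_rel m n \<Longrightarrow> (v,v') \<in> bs_rel m n \<Longrightarrow> (u@v, u'@v') \<in> bs_rel m n"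
proof -
  assume a: "(u,u') \<in> bs_rel m n" "(v,v') \<in> bs_rel m n"
  have "([] @ u @ v, [] @ u' @ v) \<in> bs_rel m n" by (rule bs_rel.cong[OF a(1)])
  moreover have "(u' @ v @ [], u' @ v' @ []) \<in> bs_rel m n" by (rule bs_rel.cong[OF a(2)])
  ultimately show ?thesis by (auto intro: bs_rel.trans)
qed

lemma gcls_self: "w \<in> gcls m n w" unfolding gcls_def by simp

lemma gcls_mem: "v \<in> gcls m n u \<Longrightarrow> gcls m n v = gcls m n u"
proof -
  assume "v \<in> gcls m n u"
  then have "(u, v) \<in> bs_rel m n" unfolding gcls_def by simp
  then have "(v, u) \<in> bs_rel m n" by (rule bs_rel.sym)
  then show ?thesis by (simp add: gcls_eq_iff)
qed

lemma carrier_BS: "carrier (BS m n) = range (gcls m n)"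
  unfolding BS_def gcls_def quotient_def by auto

lemma mult_BS: "gcls m n u \<otimes>\<^bsub>BS m n\<^esub> gcls m n v = gcls m n (u @ v)"
proof -
  have "\<And>u' v'. u' \<in> gcls m n u \<Longrightarrow> v' \<in> gcls m n v \<Longrightarrow> gcls m n (u'@v') = gcls m n (u@v)"
  proof -
    fix u' v' assume "u' \<in> gcls m n u" "v' \<in> gcls m n v"
    then have "(u, u') \<in> bs_rel m n" "(v, v') \<in> bs_rel m n" unfolding gcls_def by auto
    then have "(u@v, u'@v') \<in> bs_rel m n" by (rule bs_app)
    then show "gcls m n (u'@v') = gcls m n (u@v)" using gcls_eq_iff bs_rel.sym by metis
  qed
  then have "(\<Union>u'\<in>gcls m n u. \<Union>v'\<in>gcls m n v. gcls m n (u'@v')) = (\<Union>u'\<in>gcls m n u. \<Union>v'\<in>gcls m n v. gcls m n (u@v))"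
    by (intro SUP_cong) auto
  also have "\<dots> = gcls m n (u@v)" using gcls_self[of u m n] gcls_self[of v m n] by auto
  finally show ?thesis unfolding BS_def by simp
qed

lemma one_BS: "\<one>\<^bsub>BS m n\<^esub> = gcls m n []" unfolding BS_def by simp

definition flip :: "gen \<times> bool \<Rightarrow> gen \<times> bool" where "flip a = (fst a, \<not> snd a)"
definition winv :: "word \<Rightarrow> word" where "winv w = rev (map flip w)"

lemma winv_Nil[simp]: "winv [] = []" by (simp add: winv_def)
lemma winv_Cons[simp]: "winv (a # w) = winv w @ [flip a]" by (simp add: winv_def)
lemma winv_app[simp]: "winv (u @ v) = winv v @ winv u" by (simp add: winv_def)
lemma flip_flip[simp]: "flip (flip a) = a" by (simp add: flip_def)
lemma winv_winv[simp]: "winv (winv w) = w" by (simp add: winv_def rev_map comp_def)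

lemma cancel1: "([a, flip a], []) \<in> bs_rel m n"
  by (cases a) (simp add: flip_def bs_rel.cancel)

lemma winv_cancel: "(w @ winv w, []) \<in> bs_rel m n"
proof (induction w)
  case Nil show ?case by simp
next
  case (Cons a w)
  have "([a] @ (w @ winv w) @ [flip a], [a] @ [] @ [flip a]) \<in> bs_rel m n"
    by (rule bs_rel.cong[OF Cons])
  then have "((a # w) @ winv (a # w), [a, flip a]) \<in> bs_rel m n" by simp
  thus ?case using cancel1 bs_rel.trans by blast
qed

lemma winv_cancel2: "(winv w @ w, []) \<in> bs_rel m n"
  using winv_cancel[of "winv w"] by simp

lemma group_BS: "group (BS m n)"
proof (rule groupI)
  fix x y assume "x \<in> carrier (BS m n)" "y \<in> carrier (BS m n)"
  thus "x \<otimes>\<^bsub>BS m n\<^esub> y \<in> carrier (BS m n)" by (auto simp: carrier_BS mult_BS)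
next
  show "\<one>\<^bsub>BS m n\<^esub> \<in> carrier (BS m n)" by (simp add: carrier_BS one_BS)
next
  fix x y z assume "x \<in> carrier (BS m n)" "y \<in> carrier (BS m n)" "z \<in> carrier (BS m n)"
  thus "x \<otimes>\<^bsub>BS m n\<^esub> y \<otimes>\<^bsub>BS m n\<^esub> z = x \<otimes>\<^bsub>BS m n\<^esub> (y \<otimes>\<^bsub>BS m n\<^esub> z)"
    by (auto simp: carrier_BS mult_BS)
next
  fix x assume "x \<in> carrier (BS m n)"
  thus "\<one>\<^bsub>BS m n\<^esub> \<otimes>\<^bsub>BS m n\<^esub> x = x" by (auto simp: carrier_BS mult_BS one_BS)
next
  fix x assume "x \<in> carrier (BS m n)"
  then obtain w where w: "x = gcls m n w" by (auto simp: carrier_BS)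
  show "\<exists>y\<in>carrier (BS m n). y \<otimes>\<^bsub>BS m n\<^esub> x = \<one>\<^bsub>BS m n\<^esub>"
    by (rule bexI[of _ "gcls m n (winv w)"])
       (auto simp: w mult_BS one_BS gcls_eq_iff winv_cancel2 carrier_BS)
qed

lemma gcls_carrier[simp]: "gcls m n w \<in> carrier (BS m n)" by (simp add: carrier_BS)

lemma inv_BS: "inv\<^bsub>BS m n\<^esub> (gcls m n w) = gcls m n (winv w)"
  by (rule group.inv_equality[OF group_BS]) (auto simp: mult_BS one_BS gcls_eq_iff winv_cancel2)


interpretation BSG: group "BS m n" for m n by (rule group_BS)

lemma gcls_app: "gcls m n (u @ v) = gcls m n u \<otimes>\<^bsub>BS m n\<^esub> gcls m n v"
  by (simp add: mult_BS)

lemma gcls_Nil: "gcls m n [] = \<one>\<^bsub>BS m n\<^esub>" by (simp add: one_BS)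

lemma gcls_flip: "gcls m n [flip a] = inv\<^bsub>BS m n\<^esub> (gcls m n [a])"
  by (simp add: inv_BS winv_def)

lemma gcls_false: "gcls m n [(g, False)] = inv\<^bsub>BS m n\<^esub> (gcls m n [(g, True)])"
  using gcls_flip[of m n "(g,True)"] by (simp add: flip_def)

lemma gcls_replicate: "gcls m n (replicate k a) = gcls m n [a] [^]\<^bsub>BS m n\<^esub> k"
proof (induction k)
  case 0 show ?case by (simp add: gcls_Nil)
next
  case (Suc k)
  have "replicate (Suc k) a = replicate k a @ [a]" by (simp add: replicate_append_same)
  then show ?case using Suc by (simp add: gcls_app)
qed

lemma gcls_gpow: "gcls m n (gpow g k) = gcls m n [(g, True)] [^]\<^bsub>BS m n\<^esub> k"
proof (cases "k \<ge> 0")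
  case True
  then have "gpow g k = replicate (nat k) (g, True)" by (simp add: gpow_def)
  moreover have "k = int (nat k)" using True by simp
  ultimately show ?thesis by (metis gcls_replicate int_pow_int)
next
  case False
  then have "gpow g k = winv (replicate (nat (-k)) (g, True))"
    by (simp add: gpow_def winv_def flip_def)
  moreover have "k = - int (nat (-k))" using False by simp
  ultimately show ?thesis by (metis inv_BS gcls_replicate BSG.int_pow_neg_int gcls_carrier)
qed

lemma relator_grp: "gcls m n [(T,True)] \<otimes>\<^bsub>BS m n\<^esub> gcls m n [(B,True)] [^]\<^bsub>BS m n\<^esub> m
   \<otimes>\<^bsub>BS m n\<^esub> inv\<^bsub>BS m n\<^esub> gcls m n [(T,True)] = gcls m n [(B,True)] [^]\<^bsub>BS m n\<^esub> n"
proof -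
  have "gcls m n ([(T, True)] @ gpow B m @ [(T, False)]) = gcls m n (gpow B n)"
    using bs_rel.relator gcls_eq_iff by blast
  moreover have "gcls m n ([(T, True)] @ gpow B m @ [(T, False)]) =
     gcls m n [(T, True)] \<otimes>\<^bsub>BS m n\<^esub> (gcls m n (gpow B m) \<otimes>\<^bsub>BS m n\<^esub> gcls m n [(T, False)])"
    by (simp only: gcls_app)
  ultimately show ?thesis by (simp add: gcls_gpow gcls_false BSG.m_assoc)
qed

lemma (in group) inv_cancel_l [simp]:
  "x \<in> carrier G \<Longrightarrow> y \<in> carrier G \<Longrightarrow> inv x \<otimes> (x \<otimes> y) = y"
  by (simp add: m_assoc[symmetric])

lemma (in group) inv_cancel_r [simp]:
  "x \<in> carrier G \<Longrightarrow> y \<in> carrier G \<Longrightarrow> x \<otimes> (inv x \<otimes> y) = y"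
  by (simp add: m_assoc[symmetric])

lemma (in group) conj_nat_pow:
  assumes "g \<in> carrier G" "a \<in> carrier G"
  shows "g \<otimes> a [^] (k::nat) \<otimes> inv g = (g \<otimes> a \<otimes> inv g) [^] k"
proof (induction k)
  case 0 then show ?case using assms by simp
next
  case (Suc k)
  have "g \<otimes> a [^] Suc k \<otimes> inv g = (g \<otimes> a [^] k \<otimes> inv g) \<otimes> (g \<otimes> a \<otimes> inv g)"
    using assms by (simp add: m_assoc nat_pow_Suc)
  then show ?case using Suc by simp
qed

lemma (in group) conj_int_pow:
  assumes "g \<in> carrier G" "a \<in> carrier G"
  shows "g \<otimes> a [^] (k::int) \<otimes> inv g = (g \<otimes> a \<otimes> inv g) [^] k"
proof (cases "k < 0")
  case True
  have "g \<otimes> inv (a [^] nat (-k)) \<otimes> inv g = inv (g \<otimes> a [^] nat (-k) \<otimes> inv g)"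
    using assms by (simp add: inv_mult_group m_assoc)
  moreover have "k = - int (nat (-k))" using True by simp
  ultimately show ?thesis using assms
    by (metis conj_nat_pow int_pow_neg_int m_closed inv_closed)
next
  case False
  then have "k = int (nat k)" by simp
  then show ?thesis using assms by (metis conj_nat_pow int_pow_int m_closed inv_closed)
qed


lemma follow_app: "follow X \<beta> \<tau> z (u @ v) =
   (case follow X \<beta> \<tau> z u of None \<Rightarrow> None | Some z' \<Rightarrow> follow X \<beta> \<tau> z' v)"
  by (induction u arbitrary: z) (auto split: option.split)

lemma follow_app_Some: "follow X \<beta> \<tau> z u = Some z' \<Longrightarrow> follow X \<beta> \<tau> z' v = Some z''
   \<Longrightarrow> follow X \<beta> \<tau> z (u @ v) = Some z''"
  by (simp add: follow_app)

lemma follow_Cons_Some: "follow X \<beta> \<tau> z (a # w) = Some z'' \<longleftrightarrow>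
   (\<exists>z'. step X \<beta> \<tau> z a = Some z' \<and> follow X \<beta> \<tau> z' w = Some z'')"
  by (auto split: option.split)

lemma follow_single: "follow X \<beta> \<tau> z [a] = step X \<beta> \<tau> z a"
  by (simp split: option.split)

lemma step_BT: "step X \<beta> \<tau> z (B, True) = Some q \<longleftrightarrow> z \<in> X \<and> q = \<beta> z"
  by auto

lemma step_BF:
  assumes "bij_betw \<beta> X X"
  shows "step X \<beta> \<tau> z (B, False) = Some q \<longleftrightarrow> q \<in> X \<and> z = \<beta> q"
proof
  assume h: "step X \<beta> \<tau> z (B, False) = Some q"
  then have z: "z \<in> X" and q: "q = inv_into X \<beta> z" by (auto split: if_splits)
  have "z \<in> \<beta> ` X" using z assms by (simp add: bij_betw_def)
  then show "q \<in> X \<and> z = \<beta> q" using q by (simp add: inv_into_into f_inv_into_f)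
next
  assume h: "q \<in> X \<and> z = \<beta> q"
  then have "z \<in> X" using assms by (auto simp: bij_betw_def)
  moreover have "inv_into X \<beta> z = q" using h assms by (simp add: bij_betw_def inv_into_f_f)
  ultimately show "step X \<beta> \<tau> z (B, False) = Some q" by simp
qed

lemma step_TT: "step X \<beta> \<tau> z (T, True) = Some q \<longleftrightarrow> \<tau> z = Some q"
  by simp

lemma step_TF:
  assumes "inj_on \<tau> (dom \<tau>)"
  shows "step X \<beta> \<tau> z (T, False) = Some q \<longleftrightarrow> \<tau> q = Some z"
proof
  assume h: "step X \<beta> \<tau> z (T, False) = Some q"
  then have z: "z \<in> ran \<tau>" and q: "q = (THE u. \<tau> u = Some z)" by (auto split: if_splits)
  obtain u where u: "\<tau> u = Some z" using z by (auto simp: ran_def)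
  have "\<And>v. \<tau> v = Some z \<Longrightarrow> v = u" using assms u by (metis domI inj_on_def)
  then have "(THE u. \<tau> u = Some z) = u" using u by (rule the_equality[rotated])
  then show "\<tau> q = Some z" using q u by simp
next
  assume h: "\<tau> q = Some z"
  then have z: "z \<in> ran \<tau>" by (auto simp: ran_def)
  have "\<And>v. \<tau> v = Some z \<Longrightarrow> v = q" using assms h by (metis domI inj_on_def)
  then have "(THE u. \<tau> u = Some z) = q" using h by (rule the_equality[rotated])
  then show "step X \<beta> \<tau> z (T, False) = Some q" using z by simp
qed

lemma step_rev:
  assumes "bij_betw \<beta> X X" "inj_on \<tau> (dom \<tau>)"
  shows "step X \<beta> \<tau> z a = Some q \<Longrightarrow> step X \<beta> \<tau> q (flip a) = Some z"
proof -
  assume h: "step X \<beta> \<tau> z a = Some q"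
  obtain g b where a: "a = (g, b)" by (cases a)
  show ?thesis
  proof (cases g)
    case B then show ?thesis using h a step_BF[OF assms(1)]
      by (cases b) (simp_all add: flip_def split: if_splits)
  next
    case T then show ?thesis using h a step_TF[OF assms(2)] step_TT
      by (cases b) (simp_all add: flip_def)
  qed
qed

lemma follow_rev:
  assumes "bij_betw \<beta> X X" "inj_on \<tau> (dom \<tau>)"
  shows "follow X \<beta> \<tau> z w = Some z' \<Longrightarrow> follow X \<beta> \<tau> z' (winv w) = Some z"
proof (induction w arbitrary: z)
  case Nil then show ?case by simp
next
  case (Cons a w)
  then obtain z1 where s: "step X \<beta> \<tau> z a = Some z1" and f: "follow X \<beta> \<tau> z1 w = Some z'"
    using Cons.prems by (auto split: option.splits)
  have "follow X \<beta> \<tau> z' (winv w) = Some z1" using Cons.IH[OF f] .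
  moreover have "follow X \<beta> \<tau> z1 [flip a] = Some z" using step_rev[OF assms s] by (simp add: follow_single)
  ultimately show ?case by (simp add: follow_app_Some)
qed

lemma Stab_subgroup:
  assumes "bij_betw \<beta> X X" "inj_on \<tau> (dom \<tau>)"
  shows "subgroup (Stab m n X \<beta> \<tau> x0) (BS m n)"
proof (rule BSG.subgroupI)
  show "Stab m n X \<beta> \<tau> x0 \<subseteq> carrier (BS m n)" by (auto simp: Stab_def)
  have "gcls m n [] \<in> Stab m n X \<beta> \<tau> x0" by (auto simp: Stab_def)
  then show "Stab m n X \<beta> \<tau> x0 \<noteq> {}" by blast
next
  fix a assume "a \<in> Stab m n X \<beta> \<tau> x0"
  then obtain w where "a = gcls m n w" "follow X \<beta> \<tau> x0 w = Some x0" by (auto simp: Stab_def)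
  then show "inv\<^bsub>BS m n\<^esub> a \<in> Stab m n X \<beta> \<tau> x0"
    using follow_rev[OF assms] by (auto simp: Stab_def inv_BS)
next
  fix a b assume "a \<in> Stab m n X \<beta> \<tau> x0" "b \<in> Stab m n X \<beta> \<tau> x0"
  then obtain u v where "a = gcls m n u" "follow X \<beta> \<tau> x0 u = Some x0"
     "b = gcls m n v" "follow X \<beta> \<tau> x0 v = Some x0" by (auto simp: Stab_def)
  then show "a \<otimes>\<^bsub>BS m n\<^esub> b \<in> Stab m n X \<beta> \<tau> x0"
    by (auto simp: Stab_def mult_BS intro!: exI[of _ "u @ v"] follow_app_Some)
qed


context
  fixes A :: "'a set" and f :: "'a \<Rightarrow> 'a"
  assumes bij: "bij_betw f A A"
begin

lemma f_in: "z \<in> A \<Longrightarrow> f z \<in> A" using bij by (auto simp: bij_betw_def)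
lemma finv_in: "z \<in> A \<Longrightarrow> inv_into A f z \<in> A"
  using bij by (auto simp: bij_betw_def intro: inv_into_into)
lemma f_finv: "z \<in> A \<Longrightarrow> f (inv_into A f z) = z"
  using bij by (auto simp: bij_betw_def f_inv_into_f)
lemma finv_f: "z \<in> A \<Longrightarrow> inv_into A f (f z) = z"
  using bij by (auto simp: bij_betw_def inv_into_f_f)

lemma fpow_in: "z \<in> A \<Longrightarrow> (f ^^ j) z \<in> A"
  by (induction j) (auto intro: f_in)
lemma finvpow_in: "z \<in> A \<Longrightarrow> (inv_into A f ^^ j) z \<in> A"
  by (induction j) (auto intro: finv_in)

lemma bpow_in: "z \<in> A \<Longrightarrow> bpow A f k z \<in> A"
  by (simp add: bpow_def fpow_in finvpow_in)

lemma bpow_0[simp]: "bpow A f 0 z = z" by (simp add: bpow_def)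

lemma bpow_succ: assumes z: "z \<in> A" shows "bpow A f (k + 1) z = f (bpow A f k z)"
proof (cases "k \<ge> 0")
  case True
  then have "nat (k + 1) = Suc (nat k)" by simp
  then show ?thesis using True by (simp add: bpow_def)
next
  case False
  then obtain j where j: "nat (-k) = Suc j" by (metis gr0_implies_Suc nat_0_iff not_le zero_less_nat_eq neg_0_less_iff_less)
  have nk1: "nat (-(k+1)) = j" using j by simp
  have "bpow A f k z = inv_into A f ((inv_into A f ^^ j) z)" using False j by (simp add: bpow_def)
  then have "f (bpow A f k z) = (inv_into A f ^^ j) z" using f_finv finvpow_in z by simp
  moreover have "bpow A f (k + 1) z = (inv_into A f ^^ j) z"
  proof (cases "k + 1 \<ge> 0")
    case True then have "k = -1" using False by simp
    then show ?thesis using nk1 by (simp add: bpow_def)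
  next
    case False then show ?thesis using nk1 by (simp add: bpow_def)
  qed
  ultimately show ?thesis by simp
qed

lemma bpow_pred: assumes z: "z \<in> A" shows "bpow A f (k - 1) z = inv_into A f (bpow A f k z)"
proof -
  have "bpow A f k z = f (bpow A f (k - 1) z)" using bpow_succ[OF z, of "k - 1"] by simp
  then show ?thesis using finv_f bpow_in z by simp
qed

lemma bpow_1: "z \<in> A \<Longrightarrow> bpow A f 1 z = f z"
  using bpow_succ[of z 0] by simp

lemma bpow_add: assumes z: "z \<in> A" shows "bpow A f (a + b) z = bpow A f a (bpow A f b z)"
proof (induction a rule: int_induct[where k = 0])
  case base then show ?case by simp
next
  case (step1 i)
  have "bpow A f (i + 1 + b) z = f (bpow A f (i + b) z)"
    using bpow_succ[OF z, of "i + b"] by (simp add: algebra_simps)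
  then show ?case using step1 bpow_succ bpow_in z by simp
next
  case (step2 i)
  have "bpow A f (i - 1 + b) z = inv_into A f (bpow A f (i + b) z)"
    using bpow_pred[OF z, of "i + b"] by (simp add: algebra_simps)
  then show ?case using step2 bpow_pred bpow_in z by simp
qed

lemma bpow_inj: assumes "z \<in> A" "w \<in> A" "bpow A f k z = bpow A f k w" shows "z = w"
proof -
  have "bpow A f (-k) (bpow A f k z) = bpow A f (-k) (bpow A f k w)" using assms by simp
  then show ?thesis using bpow_add[of z "-k" k] bpow_add[of w "-k" k] assms by simp
qed

lemma bpow_eq_iff: assumes z: "z \<in> A"
  shows "bpow A f a z = bpow A f b z \<longleftrightarrow> bpow A f (a - b) z = z"
proof -
  have "bpow A f a z = bpow A f b (bpow A f (a - b) z)" using bpow_add[OF z, of b "a - b"] by simp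
  then show ?thesis using bpow_inj[of "bpow A f (a - b) z" z b] bpow_in z by auto
qed

lemma bpow_mult_period: assumes z: "z \<in> A" and p: "bpow A f d z = z" shows "bpow A f (q * d) z = z"
proof (induction q rule: int_induct[where k = 0])
  case base then show ?case by simp
next
  case (step1 i)
  have "bpow A f ((i + 1) * d) z = bpow A f d (bpow A f (i * d) z)"
    using bpow_add[OF z, of d "i * d"] by (simp add: algebra_simps)
  then show ?case using step1 p by simp
next
  case (step2 i)
  have "bpow A f (i * d) z = bpow A f d (bpow A f ((i - 1) * d) z)"
    using bpow_add[OF z, of d "(i - 1) * d"] by (simp add: algebra_simps)
  then have "bpow A f d (bpow A f ((i - 1) * d) z) = bpow A f d z" using step2 p by simp
  then show ?case using bpow_inj bpow_in z by blast
qed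

lemma follow_pos: "z \<in> A \<Longrightarrow> follow A f \<tau> z (replicate j (B, True)) = Some ((f ^^ j) z)"
proof (induction j arbitrary: z)
  case 0 then show ?case by simp
next
  case (Suc j) then show ?case using f_in by (simp add: funpow_swap1)
qed

lemma follow_neg: "z \<in> A \<Longrightarrow> follow A f \<tau> z (replicate j (B, False)) = Some ((inv_into A f ^^ j) z)"
proof (induction j arbitrary: z)
  case 0 then show ?case by simp
next
  case (Suc j) then show ?case using finv_in by (simp add: funpow_swap1)
qed

lemma follow_gpow: "z \<in> A \<Longrightarrow> follow A f \<tau> z (gpow B k) = Some (bpow A f k z)"
  by (simp add: gpow_def bpow_def follow_pos follow_neg)

end


definition per :: "'a set \<Rightarrow> ('a \<Rightarrow> 'a) \<Rightarrow> 'a \<Rightarrow> nat" where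
  "per A f z = (if finite (borbit A f z) then card (borbit A f z) else 0)"

lemma bpow_zero[simp]: "bpow A f 0 z = z" by (simp add: bpow_def)

lemma period_neg: assumes bij: "bij_betw f A A" and z: "z \<in> A" and S: "bpow A f k z = z"
  shows "bpow A f (-k) z = z"
  using bpow_add[OF bij z, of "-k" k] S by simp

lemma period_lemma:
  assumes bij: "bij_betw f A A" and z: "z \<in> A"
  shows "bpow A f a z = bpow A f b z \<longleftrightarrow> int (per A f z) dvd (a - b)"
proof -
  let ?S = "\<lambda>k. bpow A f k z = z"
  have key: "?S k \<longleftrightarrow> int (per A f z) dvd k" for k
  proof (cases "\<exists>d::nat. d > 0 \<and> ?S (int d)")
    case True
    define d0 where "d0 = (LEAST d::nat. d > 0 \<and> ?S (int d))"
    have d0: "d0 > 0" "?S (int d0)" using LeastI_ex[OF True] unfolding d0_def by auto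
    have min: "\<And>d. 0 < d \<Longrightarrow> d < d0 \<Longrightarrow> \<not> ?S (int d)" unfolding d0_def using not_less_Least by blast
    have Sdvd: "?S k \<longleftrightarrow> int d0 dvd k" for k
    proof
      assume Sk: "?S k"
      define r where "r = k mod int d0"
      have kr: "k = (k div int d0) * int d0 + r" unfolding r_def by simp
      have "bpow A f k z = bpow A f r (bpow A f ((k div int d0) * int d0) z)"
        using bpow_add[OF bij z, of r "(k div int d0) * int d0"] kr by (simp add: algebra_simps)
      then have Sr: "?S r" using Sk bpow_mult_period[OF bij z d0(2)] by simp
      have r: "0 \<le> r" "r < int d0" unfolding r_def using d0 by auto
      have "r = 0"
      proof (rule ccontr)
        assume "r \<noteq> 0"
        then have "0 < nat r" "nat r < d0" using r by auto
        then show False using min[of "nat r"] Sr r by simp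
      qed
      then show "int d0 dvd k" unfolding r_def by auto
    next
      assume "int d0 dvd k"
      then obtain q where "k = int d0 * q" by (rule dvdE)
      then have "k = q * int d0" by simp
      then show "?S k" using bpow_mult_period[OF bij z d0(2)] by simp
    qed
    have orb: "borbit A f z = (\<lambda>k. bpow A f k z) ` {0..<int d0}"
    proof
      show "borbit A f z \<subseteq> (\<lambda>k. bpow A f k z) ` {0..<int d0}"
      proof
        fix w assume "w \<in> borbit A f z"
        then obtain k where w: "w = bpow A f k z" by (auto simp: borbit_def)
        have "k - k mod int d0 = (k div int d0) * int d0" using div_mult_mod_eq[of k "int d0"] by linarith
        then have "int d0 dvd (k - k mod int d0)" by simp
        then have "bpow A f k z = bpow A f (k mod int d0) z" using bpow_eq_iff[OF bij z] Sdvd by blast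
        moreover have "k mod int d0 \<in> {0..<int d0}" using d0 by simp
        ultimately show "w \<in> (\<lambda>k. bpow A f k z) ` {0..<int d0}" using w by blast
      qed
    qed (auto simp: borbit_def)
    have inj: "inj_on (\<lambda>k. bpow A f k z) {0..<int d0}"
    proof (rule inj_onI)
      fix i j assume ij: "i \<in> {0..<int d0}" "j \<in> {0..<int d0}" "bpow A f i z = bpow A f j z"
      then have "int d0 dvd (i - j)" using bpow_eq_iff[OF bij z] Sdvd by blast
      moreover have "\<bar>i - j\<bar> < int d0" using ij by auto
      ultimately show "i = j" using dvd_imp_le_int[of "i - j" "int d0"] by (cases "i - j = 0") auto
    qed
    have "card (borbit A f z) = d0" using orb card_image[OF inj] by simp
    then have "per A f z = d0" using orb by (simp add: per_def)
    then show ?thesis using Sdvd by simp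
  next
    case False
    have inf: "infinite (borbit A f z)"
    proof
      assume fin: "finite (borbit A f z)"
      define g where "g = (\<lambda>j::nat. bpow A f (int j) z)"
      have "range g \<subseteq> borbit A f z" by (auto simp: g_def borbit_def)
      then have "finite (range g)" using fin finite_subset by blast
      then have "\<not> inj g" using finite_imageD infinite_UNIV_nat by blast
      then obtain i j where ij: "i \<noteq> j" "g i = g j" by (auto simp: inj_def)
      have "?S (int i - int j)" using ij bpow_eq_iff[OF bij z, of "int i" "int j"] by (simp add: g_def)
      moreover have "?S (int j - int i)" using ij bpow_eq_iff[OF bij z, of "int j" "int i"] by (simp add: g_def)
      ultimately show False
      proof (cases "i < j")
        case True
        then have "int (j - i) = int j - int i" by simp
        then have "?S (int (j - i))" using \<open>?S (int j - int i)\<close> by simp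
        then show False using \<open>\<not> (\<exists>d::nat. d > 0 \<and> ?S (int d))\<close> True by (meson zero_less_diff)
      next
        case False
        then have "i > j" using ij by simp
        then have "int (i - j) = int i - int j" by simp
        then have "?S (int (i - j))" using \<open>?S (int i - int j)\<close> by simp
        then show False using \<open>\<not> (\<exists>d::nat. d > 0 \<and> ?S (int d))\<close> \<open>i > j\<close> by (meson zero_less_diff)
      qed
    qed
    have "?S k \<longleftrightarrow> k = 0"
    proof
      assume Sk: "?S k"
      show "k = 0"
      proof (rule ccontr)
        assume "k \<noteq> 0"
        then consider "k > 0" | "-k > 0" by linarith
        then show False
        proof cases
          case 1
          then have "?S (int (nat k))" using Sk by simp
          then show False using False 1 by (meson zero_less_nat_eq)
        next
          case 2
          then have "?S (int (nat (-k)))" using period_neg[OF bij z Sk] by simp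
          then show False using False 2 by (meson zero_less_nat_eq)
        qed
      qed
    qed simp
    then show ?thesis using inf by (simp add: per_def)
  qed
  show ?thesis using key bpow_eq_iff[OF bij z] by simp
qed


lemma (in group) alg_conj_pow:
  assumes E: "E \<in> carrier G" and b: "b \<in> carrier G"
    and rel: "E \<otimes> b [^] (m'::int) \<otimes> inv E = b [^] (n'::int)"
  shows "E \<otimes> b [^] (k * m') \<otimes> inv E = b [^] (k * n')"
proof -
  have "E \<otimes> b [^] (k * m') \<otimes> inv E = E \<otimes> (b [^] m') [^] k \<otimes> inv E"
    using b by (simp add: int_pow_pow mult.commute)
  also have "\<dots> = (E \<otimes> b [^] m' \<otimes> inv E) [^] k" using E b by (simp add: conj_int_pow)
  also have "\<dots> = b [^] (k * n')" using rel b by (simp add: int_pow_pow mult.commute)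
  finally show ?thesis .
qed

lemma (in group) alg_K3:
  assumes C: "C \<in> carrier G" and E: "E \<in> carrier G" and b: "b \<in> carrier G"
    and k: "k1 + 1 = k2 + i * P"
  shows "(C \<otimes> E \<otimes> b [^] (k1::int)) \<otimes> b \<otimes> inv (C \<otimes> E \<otimes> b [^] (k2::int))
       = (C \<otimes> E \<otimes> b [^] (P::int) \<otimes> inv E \<otimes> inv C) [^] i"
proof -
  define g where "g = C \<otimes> E"
  have g: "g \<in> carrier G" using C E by (simp add: g_def)
  have ig: "inv g = inv E \<otimes> inv C" using C E by (simp add: g_def inv_mult_group)
  have "b [^] k1 \<otimes> b \<otimes> inv (b [^] k2) = b [^] (k1 + 1 - k2)"
    using b by (simp add: int_pow_mult int_pow_diff)
  also have "\<dots> = b [^] (i * P)" using k by (simp add: algebra_simps)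
  finally have e1: "b [^] k1 \<otimes> b \<otimes> inv (b [^] k2) = b [^] (i * P)" .
  have "(C \<otimes> E \<otimes> b [^] k1) \<otimes> b \<otimes> inv (C \<otimes> E \<otimes> b [^] k2) = g \<otimes> (b [^] k1 \<otimes> b \<otimes> inv (b [^] k2)) \<otimes> inv g"
    using g b by (simp add: g_def[symmetric] inv_mult_group m_assoc)
  also have "\<dots> = g \<otimes> b [^] (i * P) \<otimes> inv g" using e1 by simp
  also have "\<dots> = g \<otimes> (b [^] P) [^] i \<otimes> inv g" using b by (simp add: int_pow_pow mult.commute)
  also have "\<dots> = (g \<otimes> b [^] P \<otimes> inv g) [^] i" using g b by (simp add: conj_int_pow)
  also have "g \<otimes> b [^] P \<otimes> inv g = C \<otimes> E \<otimes> b [^] P \<otimes> inv E \<otimes> inv C"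
    using C E b by (simp add: g_def inv_mult_group m_assoc)
  finally show ?thesis .
qed

lemma (in group) alg_K4:
  assumes C: "C \<in> carrier G" and E: "E \<in> carrier G" and b: "b \<in> carrier G" and p: "p \<in> carrier G"
    and rel: "\<And>k. E \<otimes> b [^] (k * m') \<otimes> inv E = b [^] (k * (n'::int))"
    and k: "\<kappa> = j * m' + i * P"
  shows "p \<otimes> E \<otimes> inv (C \<otimes> E \<otimes> b [^] (\<kappa>::int))
       = (p \<otimes> inv (C \<otimes> b [^] (j * n'))) \<otimes> (C \<otimes> E \<otimes> b [^] (P::int) \<otimes> inv E \<otimes> inv C) [^] (-i)"
proof -
  have bk: "b [^] (-\<kappa>) = b [^] ((-j) * m') \<otimes> b [^] (-i * P)"
    using k b by (simp add: int_pow_mult[symmetric] algebra_simps)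
  have cj: "E \<otimes> b [^] ((-j) * m') \<otimes> inv E = b [^] ((-j) * n')" by (rule rel)
  have "p \<otimes> E \<otimes> inv (C \<otimes> E \<otimes> b [^] \<kappa>) = p \<otimes> E \<otimes> b [^] (-\<kappa>) \<otimes> inv E \<otimes> inv C"
    using C E b p by (simp add: inv_mult_group m_assoc int_pow_neg)
  also have "\<dots> = p \<otimes> (E \<otimes> b [^] ((-j) * m') \<otimes> inv E) \<otimes> (E \<otimes> b [^] (-i * P) \<otimes> inv E) \<otimes> inv C"
    using C E b p by (simp add: bk m_assoc)
  also have "\<dots> = p \<otimes> b [^] ((-j) * n') \<otimes> (E \<otimes> b [^] (-i * P) \<otimes> inv E) \<otimes> inv C"
    using cj by simp
  also have "\<dots> = (p \<otimes> inv (C \<otimes> b [^] (j * n'))) \<otimes> (C \<otimes> E \<otimes> b [^] (P * (-i)) \<otimes> inv E \<otimes> inv C)"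
    using C E b p by (simp add: inv_mult_group m_assoc int_pow_neg[symmetric] mult.commute)
  also have "C \<otimes> E \<otimes> b [^] (P * (-i)) \<otimes> inv E \<otimes> inv C = (C \<otimes> E \<otimes> b [^] P \<otimes> inv E \<otimes> inv C) [^] (-i)"
  proof -
    have "C \<otimes> E \<otimes> b [^] (P * (-i)) \<otimes> inv E \<otimes> inv C = (C \<otimes> E) \<otimes> (b [^] P) [^] (-i) \<otimes> inv (C \<otimes> E)"
      using C E b by (simp add: int_pow_pow inv_mult_group m_assoc)
    also have "\<dots> = ((C \<otimes> E) \<otimes> b [^] P \<otimes> inv (C \<otimes> E)) [^] (-i)"
      using C E b by (simp add: conj_int_pow)
    also have "(C \<otimes> E) \<otimes> b [^] P \<otimes> inv (C \<otimes> E) = C \<otimes> E \<otimes> b [^] P \<otimes> inv E \<otimes> inv C"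
      using C E b by (simp add: inv_mult_group m_assoc)
    finally show ?thesis .
  qed
  finally show ?thesis .
qed

lemma dvd_div_gcd_iff:
  fixes a k m :: int assumes "a > 0"
  shows "a dvd k * m \<longleftrightarrow> (a div gcd a m) dvd k"
proof -
  define g where "g = gcd a m"
  have g0: "g > 0" using assms by (simp add: g_def)
  have a: "a = (a div g) * g" and mm: "m = (m div g) * g" by (simp_all add: g_def)
  have cop: "coprime (a div g) (m div g)" using assms unfolding g_def by (simp add: div_gcd_coprime)
  have "a dvd k * m \<longleftrightarrow> (a div g) * g dvd (k * (m div g)) * g" using a mm
    by (metis mult.assoc mult.commute)
  also have "\<dots> \<longleftrightarrow> (a div g) dvd k * (m div g)" using g0 by simp
  also have "\<dots> \<longleftrightarrow> (a div g) dvd k" using cop by (simp add: coprime_dvd_mult_left_iff)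
  finally show ?thesis by (simp add: g_def)
qed


locale bsx =
  fixes m n :: int and r :: "enat \<Rightarrow> bool \<Rightarrow> enat"
    and X0 X Y :: "'a set" and \<beta>0 \<beta> :: "'a \<Rightarrow> 'a" and \<tau>0 \<tau> :: "'a \<rightharpoonup> 'a"
    and x y x0 :: 'a and s :: bool and c :: word
  assumes m2: "\<bar>m\<bar> \<ge> 2" and n2: "\<bar>n\<bar> \<ge> 2"
    and tr: "transfer_rule m n r"
    and pre: "pre_action m n X0 \<beta>0 \<tau>0"
    and xX0: "x \<in> X0"
    and ext: "one_orbit_free_ext m n r X0 \<beta>0 \<tau>0 x X \<beta> \<tau> Y y s"
    and x0X0: "x0 \<in> X0"
    and cpath: "follow X0 \<beta>0 \<tau>0 x0 c = Some x"
begin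

definition "m' = (if s then m else n)"
definition "n' = (if s then n else m)"
definition "NewE p q \<longleftrightarrow> (\<exists>j. p = bpow X0 \<beta>0 (j * n') x \<and> q = bpow Y \<beta> (j * m') y)"
definition "P = per Y \<beta> y"
definition "La = per X0 \<beta>0 x"

lemma bij0: "bij_betw \<beta>0 X0 X0" using pre by (simp add: pre_action_def)
lemma dom0: "dom \<tau>0 \<subseteq> X0" using pre by (simp add: pre_action_def)
lemma ran0: "ran \<tau>0 \<subseteq> X0" using pre by (simp add: pre_action_def)
lemma inj0: "inj_on \<tau>0 (dom \<tau>0)" using pre by (simp add: pre_action_def)
lemma ranm: "bpow X0 \<beta>0 m ` ran \<tau>0 = ran \<tau>0" using pre by (simp add: pre_action_def)

lemmas E = ext[unfolded one_orbit_free_ext_def]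
lemma disj: "Y \<inter> X0 = {}" using E[THEN conjunct2, THEN conjunct1] .
lemma yY: "y \<in> Y" using E[THEN conjunct2, THEN conjunct2, THEN conjunct1] .
lemma bijY: "bij_betw \<beta> Y Y" using E[THEN conjunct2, THEN conjunct2, THEN conjunct2, THEN conjunct1] .
lemma Yorb: "Y = borbit Y \<beta> y" using E[THEN conjunct2, THEN conjunct2, THEN conjunct2, THEN conjunct2, THEN conjunct1] .
lemma ecY: "ecard Y = r (ecard (borbit X0 \<beta>0 x)) s" using E[THEN conjunct2, THEN conjunct2, THEN conjunct2, THEN conjunct2, THEN conjunct2, THEN conjunct1] .
lemma Xdef: "X = X0 \<union> Y" using E[THEN conjunct2, THEN conjunct2, THEN conjunct2, THEN conjunct2, THEN conjunct2, THEN conjunct2, THEN conjunct1] .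
lemma beq': "\<forall>z \<in> X0. \<beta> z = \<beta>0 z" using E[THEN conjunct2, THEN conjunct2, THEN conjunct2, THEN conjunct2, THEN conjunct2, THEN conjunct2, THEN conjunct2, THEN conjunct1] .
lemma teq': "\<forall>z \<in> dom \<tau>0. \<tau> z = \<tau>0 z" using E[THEN conjunct2, THEN conjunct2, THEN conjunct2, THEN conjunct2, THEN conjunct2, THEN conjunct2, THEN conjunct2, THEN conjunct2, THEN conjunct1] .
lemma sif: "if s then
        x \<notin> dom \<tau>0 \<and>
        dom \<tau> = dom \<tau>0 \<union> {bpow X0 \<beta>0 (j * n) x | j. True} \<and>
        (\<forall>j. \<tau> (bpow X0 \<beta>0 (j * n) x) = Some (bpow Y \<beta> (j * m) y))
      else
        x \<notin> ran \<tau>0 \<and>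
        dom \<tau> = dom \<tau>0 \<union> {bpow Y \<beta> (j * n) y | j. True} \<and>
        (\<forall>j. \<tau> (bpow Y \<beta> (j * n) y) = Some (bpow X0 \<beta>0 (j * m) x))"
  using E[THEN conjunct2, THEN conjunct2, THEN conjunct2, THEN conjunct2, THEN conjunct2, THEN conjunct2, THEN conjunct2, THEN conjunct2, THEN conjunct2] .
lemma beq: "z \<in> X0 \<Longrightarrow> \<beta> z = \<beta>0 z" using beq' by blast
lemma teq: "z \<in> dom \<tau>0 \<Longrightarrow> \<tau> z = \<tau>0 z" using teq' by blast
lemma spos: "s \<Longrightarrow> x \<notin> dom \<tau>0 \<and> dom \<tau> = dom \<tau>0 \<union> {bpow X0 \<beta>0 (j * n) x | j. True} \<and>
        (\<forall>j. \<tau> (bpow X0 \<beta>0 (j * n) x) = Some (bpow Y \<beta> (j * m) y))"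
proof -
  assume h: s
  show ?thesis using sif unfolding if_P[OF h] .
qed
lemma sneg: "\<not> s \<Longrightarrow> x \<notin> ran \<tau>0 \<and> dom \<tau> = dom \<tau>0 \<union> {bpow Y \<beta> (j * n) y | j. True} \<and>
        (\<forall>j. \<tau> (bpow Y \<beta> (j * n) y) = Some (bpow X0 \<beta>0 (j * m) x))"
proof -
  assume h: "\<not> s"
  show ?thesis using sif unfolding if_not_P[OF h] .
qed

lemma bijX: "bij_betw \<beta> X X"
proof -
  have b0: "bij_betw \<beta> X0 X0" using bij0 bij_betw_cong[of X0 \<beta> \<beta>0 X0] beq by blast
  have "X0 \<inter> Y = {}" using disj by blast
  then have "bij_betw \<beta> (X0 \<union> Y) (X0 \<union> Y)" by (rule bij_betw_combine[OF b0 bijY])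
  then show ?thesis by (simp add: Xdef)
qed

lemma bpowY_in: "bpow Y \<beta> k y \<in> Y" using bpow_in[OF bijY yY] .
lemma bpowX0_in: "z \<in> X0 \<Longrightarrow> bpow X0 \<beta>0 k z \<in> X0" using bpow_in[OF bij0] .

lemma tau_iff: "\<tau> u = Some v \<longleftrightarrow> \<tau>0 u = Some v \<or> (if s then NewE u v else NewE v u)"
proof (cases s)
  case True
  have d: "dom \<tau> = dom \<tau>0 \<union> {bpow X0 \<beta>0 (j * n) x | j. True}"
    and v: "\<And>j. \<tau> (bpow X0 \<beta>0 (j * n) x) = Some (bpow Y \<beta> (j * m) y)"
    using spos[OF True, THEN conjunct2, THEN conjunct1] spos[OF True, THEN conjunct2, THEN conjunct2] by simp_all
  have mn: "m' = m" "n' = n" unfolding m'_def n'_def using True by simp_all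
  show ?thesis
  proof
    assume h: "\<tau> u = Some v"
    then have "u \<in> dom \<tau>" by auto
    show "\<tau>0 u = Some v \<or> (if s then NewE u v else NewE v u)"
    proof (cases "u \<in> dom \<tau>0")
      case True then show ?thesis using teq h by simp
    next
      case False
      then obtain j where u: "u = bpow X0 \<beta>0 (j * n) x" using d \<open>u \<in> dom \<tau>\<close> by auto
      then have "v = bpow Y \<beta> (j * m) y" using v h by simp
      then have "NewE u v" unfolding NewE_def mn using u by blast
      then show ?thesis using \<open>s\<close> by simp
    qed
  next
    assume h: "\<tau>0 u = Some v \<or> (if s then NewE u v else NewE v u)"
    show "\<tau> u = Some v"
    proof (cases "\<tau>0 u = Some v")
      case True then show ?thesis using teq by (simp add: domI)
    next
      case False
      then have "NewE u v" using h \<open>s\<close> by simp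
      then show ?thesis unfolding NewE_def mn using v by auto
    qed
  qed
next
  case False
  have d: "dom \<tau> = dom \<tau>0 \<union> {bpow Y \<beta> (j * n) y | j. True}"
    and v: "\<And>j. \<tau> (bpow Y \<beta> (j * n) y) = Some (bpow X0 \<beta>0 (j * m) x)"
    using sneg[OF False, THEN conjunct2, THEN conjunct1] sneg[OF False, THEN conjunct2, THEN conjunct2] by simp_all
  have mn: "m' = n" "n' = m" unfolding m'_def n'_def using False by simp_all
  show ?thesis
  proof
    assume h: "\<tau> u = Some v"
    then have "u \<in> dom \<tau>" by auto
    show "\<tau>0 u = Some v \<or> (if s then NewE u v else NewE v u)"
    proof (cases "u \<in> dom \<tau>0")
      case True then show ?thesis using teq h by simp
    next
      case False
      then obtain j where u: "u = bpow Y \<beta> (j * n) y" using d \<open>u \<in> dom \<tau>\<close> by auto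
      then have "v = bpow X0 \<beta>0 (j * m) x" using v h by simp
      then have "NewE v u" unfolding NewE_def mn using u by blast
      then show ?thesis using \<open>\<not> s\<close> by simp
    qed
  next
    assume h: "\<tau>0 u = Some v \<or> (if s then NewE u v else NewE v u)"
    show "\<tau> u = Some v"
    proof (cases "\<tau>0 u = Some v")
      case True then show ?thesis using teq by (simp add: domI)
    next
      case False
      then have "NewE v u" using h \<open>\<not> s\<close> by simp
      then show ?thesis unfolding NewE_def mn using v by auto
    qed
  qed
qed

end

lemma ecard_enat: "ecard A = enat k \<Longrightarrow> finite A \<and> card A = k"
  by (auto simp: ecard_def split: if_splits)

lemma ecard_inf: "ecard A = \<infinity> \<longleftrightarrow> infinite A"
  by (auto simp: ecard_def)

lemma in_borbit: "z \<in> borbit A f z"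
  unfolding borbit_def by (rule CollectI, rule exI[of _ 0]) simp

context bsx begin

lemma mn0: "m \<noteq> 0" "n \<noteq> 0" "m' \<noteq> 0" "n' \<noteq> 0" using m2 n2 by (auto simp: m'_def n'_def)

lemma P_def2: "P = (if finite Y then card Y else 0)"
  unfolding P_def per_def by (simp only: Yorb[symmetric])

lemma DV: "int P dvd d * m' \<longleftrightarrow> int La dvd d * n'"
proof -
  define Lx where "Lx = ecard (borbit X0 \<beta>0 x)"
  have Lx1: "Lx \<ge> 1"
  proof (cases "finite (borbit X0 \<beta>0 x)")
    case True
    have "x \<in> borbit X0 \<beta>0 x" by (rule in_borbit)
    then have c: "card (borbit X0 \<beta>0 x) > 0" using True card_gt_0_iff by blast
    have "Lx = enat (card (borbit X0 \<beta>0 x))" unfolding Lx_def ecard_def using True by simp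
    then show ?thesis using c by (simp add: one_enat_def)
  next
    case False
    have "Lx = \<infinity>" unfolding Lx_def ecard_def using False by simp
    then show ?thesis by simp
  qed
  have trL: "r Lx s \<ge> 1 \<and> (Lx = \<infinity> \<longleftrightarrow> r Lx s = \<infinity>) \<and>
        (\<forall>a b. Lx = enat a \<longrightarrow> r Lx s = enat b \<longrightarrow>
           (if s then int a div gcd (int a) n = int b div gcd (int b) m
                 else int a div gcd (int a) m = int b div gcd (int b) n))"
    using tr[unfolded transfer_rule_def, THEN spec[where x=Lx], THEN spec[where x=s]] Lx1 by (rule mp)
  have eY: "ecard Y = r Lx s" using ecY by (simp add: Lx_def)
  show ?thesis
  proof (cases "Lx = \<infinity>")
    case True
    have "r Lx s = \<infinity>" using trL True by blast
    then have "ecard Y = \<infinity>" using eY by simp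
    then have "infinite Y" using ecard_inf by blast
    then have "P = 0" by (simp add: P_def2)
    moreover have "ecard (borbit X0 \<beta>0 x) = \<infinity>" using True Lx_def by simp
    then have "infinite (borbit X0 \<beta>0 x)" using ecard_inf by blast
    then have "La = 0" by (simp add: La_def per_def)
    ultimately show ?thesis using mn0 by simp
  next
    case False
    then obtain a where a: "Lx = enat a" by (cases Lx) auto
    have "ecard (borbit X0 \<beta>0 x) = enat a" using a Lx_def by simp
    note fa = ecard_enat[OF this]
    have "r Lx s \<noteq> \<infinity>" using trL False by blast
    then obtain b where b: "r Lx s = enat b" by (cases "r Lx s") auto
    have "ecard Y = enat b" using b eY by simp
    note fb = ecard_enat[OF this]
    have La: "La = a" using fa by (simp add: La_def per_def)
    have Pb: "P = b" using fb by (simp add: P_def2)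
    have a0: "a > 0" using fa in_borbit[of x X0 \<beta>0] card_gt_0_iff by blast
    have b0: "b > 0" using fb yY card_gt_0_iff by blast
    have eq0: "if s then int a div gcd (int a) n = int b div gcd (int b) m
                 else int a div gcd (int a) m = int b div gcd (int b) n"
      using trL a b by blast
    have eq: "int a div gcd (int a) n' = int b div gcd (int b) m'"
    proof (cases s)
      case True then show ?thesis using eq0 unfolding m'_def n'_def by simp
    next
      case False then show ?thesis using eq0 unfolding m'_def n'_def by simp
    qed
    have "int b dvd d * m' \<longleftrightarrow> int b div gcd (int b) m' dvd d" using dvd_div_gcd_iff[of "int b" d m'] b0 by simp
    moreover have "int a dvd d * n' \<longleftrightarrow> int a div gcd (int a) n' dvd d" using dvd_div_gcd_iff[of "int a" d n'] a0 by simp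
    ultimately show ?thesis unfolding La Pb using eq by simp
  qed
qed

lemma NewE_bij:
  "bpow Y \<beta> (j * m') y = bpow Y \<beta> (j' * m') y \<longleftrightarrow> bpow X0 \<beta>0 (j * n') x = bpow X0 \<beta>0 (j' * n') x"
proof -
  have "bpow Y \<beta> (j * m') y = bpow Y \<beta> (j' * m') y \<longleftrightarrow> int P dvd (j - j') * m'"
    using period_lemma[OF bijY yY] by (simp add: P_def algebra_simps)
  also have "\<dots> \<longleftrightarrow> int La dvd (j - j') * n'" by (rule DV)
  also have "\<dots> \<longleftrightarrow> bpow X0 \<beta>0 (j * n') x = bpow X0 \<beta>0 (j' * n') x"
    using period_lemma[OF bij0 xX0] by (simp add: La_def algebra_simps)
  finally show ?thesis .
qed

lemma NewE_in: "NewE p q \<Longrightarrow> p \<in> X0 \<and> q \<in> Y"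
  unfolding NewE_def using bpowY_in bpowX0_in xX0 by auto

lemma NewE_inj1: "NewE p q \<Longrightarrow> NewE p' q \<Longrightarrow> p = p'"
  unfolding NewE_def using NewE_bij by auto

lemma NewE_inj2: "NewE p q \<Longrightarrow> NewE p q' \<Longrightarrow> q = q'"
  unfolding NewE_def using NewE_bij by auto

lemma ran_inv1: assumes z: "z \<in> X0" shows "bpow X0 \<beta>0 m z \<in> ran \<tau>0 \<longleftrightarrow> z \<in> ran \<tau>0"
proof
  assume "z \<in> ran \<tau>0" then show "bpow X0 \<beta>0 m z \<in> ran \<tau>0" using ranm by blast
next
  assume "bpow X0 \<beta>0 m z \<in> ran \<tau>0"
  then obtain w where w: "w \<in> ran \<tau>0" "bpow X0 \<beta>0 m z = bpow X0 \<beta>0 m w" using ranm by (metis imageE)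
  then have "w \<in> X0" using ran0 by blast
  then have "z = w" using bpow_inj[OF bij0 z] w by blast
  then show "z \<in> ran \<tau>0" using w by simp
qed

lemma ran_inv: assumes z: "z \<in> X0" shows "bpow X0 \<beta>0 (j * m) z \<in> ran \<tau>0 \<longleftrightarrow> z \<in> ran \<tau>0"
proof (induction j rule: int_induct[where k = 0])
  case base then show ?case by simp
next
  case (step1 i)
  have "bpow X0 \<beta>0 ((i + 1) * m) z = bpow X0 \<beta>0 m (bpow X0 \<beta>0 (i * m) z)"
    using bpow_add[OF bij0 z, of m "i * m"] by (simp add: algebra_simps)
  then show ?case using step1 ran_inv1 bpowX0_in z by simp
next
  case (step2 i)
  have "bpow X0 \<beta>0 (i * m) z = bpow X0 \<beta>0 m (bpow X0 \<beta>0 ((i - 1) * m) z)"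
    using bpow_add[OF bij0 z, of m "(i - 1) * m"] by (simp add: algebra_simps)
  then show ?case using step2 ran_inv1 bpowX0_in z by simp
qed

lemma inj_tau: "inj_on \<tau> (dom \<tau>)"
proof (rule inj_onI)
  fix u v assume "u \<in> dom \<tau>" "v \<in> dom \<tau>" "\<tau> u = \<tau> v"
  then obtain w where u: "\<tau> u = Some w" and v: "\<tau> v = Some w" by auto
  note tu = u[unfolded tau_iff] and tv = v[unfolded tau_iff]
  show "u = v"
  proof (cases s)
    case True
    then have tu': "\<tau>0 u = Some w \<or> NewE u w" and tv': "\<tau>0 v = Some w \<or> NewE v w"
      using tu tv by simp_all
    have oldY: "\<tau>0 z = Some w \<Longrightarrow> NewE z' w \<Longrightarrow> False" for z z'
      using NewE_in ran0 disj by (auto simp: ran_def)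
    show ?thesis using tu' tv' oldY NewE_inj1 inj0 by (metis domI inj_on_def)
  next
    case False
    then have tu': "\<tau>0 u = Some w \<or> NewE w u" and tv': "\<tau>0 v = Some w \<or> NewE w v"
      using tu tv by simp_all
    have xr: "x \<notin> ran \<tau>0" using sneg[OF False] by blast
    have mm: "m' = n" "n' = m" unfolding m'_def n'_def using False by simp_all
    have oldX: "\<tau>0 z = Some w \<Longrightarrow> NewE w z' \<Longrightarrow> False" for z z'
    proof -
      assume "\<tau>0 z = Some w" "NewE w z'"
      then obtain j where "w \<in> ran \<tau>0" "w = bpow X0 \<beta>0 (j * m) x"
        unfolding NewE_def mm by (auto simp: ran_def)
      then show False using ran_inv[OF xX0, of j] xr by simp
    qed
    show ?thesis using tu' tv' oldX NewE_inj2 inj0 by (metis domI inj_on_def)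
  qed
qed

end

context bsx begin

abbreviation "GG \<equiv> BS m n"
definition "C = gcls m n c"
definition "Eg = gcls m n [(T, s)]"
definition "bb = gcls m n [(B, True)]"
definition "gam = C \<otimes>\<^bsub>GG\<^esub> gcls m n (tword s P) \<otimes>\<^bsub>GG\<^esub> inv\<^bsub>GG\<^esub> C"
definition "R = {p. \<exists>w. follow X0 \<beta>0 \<tau>0 x0 w = Some p}"
definition "dp p = (SOME w. follow X0 \<beta>0 \<tau>0 x0 w = Some p)"
definition "kap q = (SOME k. q = bpow Y \<beta> k y)"
definition "sig p = (if p \<in> Y then C \<otimes>\<^bsub>GG\<^esub> Eg \<otimes>\<^bsub>GG\<^esub> bb [^]\<^bsub>GG\<^esub> kap p else gcls m n (dp p))"
definition "cond p l q = sig p \<otimes>\<^bsub>GG\<^esub> gcls m n [l] \<otimes>\<^bsub>GG\<^esub> inv\<^bsub>GG\<^esub> sig q"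
abbreviation "Stab0 \<equiv> Stab m n X0 \<beta>0 \<tau>0 x0"

lemma C_c[simp]: "C \<in> carrier GG" by (simp add: C_def)
lemma Eg_c[simp]: "Eg \<in> carrier GG" by (simp add: Eg_def)
lemma bb_c[simp]: "bb \<in> carrier GG" by (simp add: bb_def)
lemma sig_c[simp]: "sig p \<in> carrier GG" by (simp add: sig_def)
lemma gam_c[simp]: "gam \<in> carrier GG" by (simp add: gam_def)

lemma old_step_X0: "p \<in> X0 \<Longrightarrow> step X0 \<beta>0 \<tau>0 p l = Some q \<Longrightarrow> q \<in> X0"
proof -
  assume p: "p \<in> X0" and h: "step X0 \<beta>0 \<tau>0 p l = Some q"
  obtain g b where l: "l = (g, b)" by (cases l)
  show "q \<in> X0"
  proof (cases g)
    case B then show ?thesis using h l p f_in[OF bij0] finv_in[OF bij0]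
      by (cases b) (auto split: if_splits)
  next
    case T then show ?thesis using h l step_TF[OF inj0] ran0 dom0
      by (cases b) (auto simp: ran_def)
  qed
qed

lemma follow_X0: "p \<in> X0 \<Longrightarrow> follow X0 \<beta>0 \<tau>0 p w = Some q \<Longrightarrow> q \<in> X0"
proof (induction w arbitrary: p)
  case Nil then show ?case by simp
next
  case (Cons a w)
  then obtain p' where "step X0 \<beta>0 \<tau>0 p a = Some p'" "follow X0 \<beta>0 \<tau>0 p' w = Some q"
    by (auto split: option.splits)
  then show ?case using Cons old_step_X0 by blast
qed

lemma R_X0: "p \<in> R \<Longrightarrow> p \<in> X0" using follow_X0 x0X0 by (auto simp: R_def)
lemma R_notY: "p \<in> R \<Longrightarrow> p \<notin> Y" using R_X0 disj by blast
lemma x0R: "x0 \<in> R" unfolding R_def by (rule CollectI, rule exI[of _ "[]"]) simp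
lemma dp: "p \<in> R \<Longrightarrow> follow X0 \<beta>0 \<tau>0 x0 (dp p) = Some p"
  unfolding R_def dp_def by (auto intro: someI_ex)
lemma sig_R: "p \<in> R \<Longrightarrow> sig p = gcls m n (dp p)" using R_notY by (simp add: sig_def)
lemma sig_Y: "p \<in> Y \<Longrightarrow> sig p = C \<otimes>\<^bsub>GG\<^esub> Eg \<otimes>\<^bsub>GG\<^esub> bb [^]\<^bsub>GG\<^esub> kap p" by (simp add: sig_def)

lemma R_step: "p \<in> R \<Longrightarrow> step X0 \<beta>0 \<tau>0 p l = Some q \<Longrightarrow> q \<in> R"
proof -
  assume "p \<in> R" "step X0 \<beta>0 \<tau>0 p l = Some q"
  then have "follow X0 \<beta>0 \<tau>0 x0 (dp p @ [l]) = Some q" using dp by (simp add: follow_app follow_single)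
  then show "q \<in> R" unfolding R_def by blast
qed

lemma cpath_gpow: "follow X0 \<beta>0 \<tau>0 x0 (c @ gpow B k) = Some (bpow X0 \<beta>0 k x)"
  using cpath follow_gpow[OF bij0 xX0] by (simp add: follow_app)

lemma bpow_R: "bpow X0 \<beta>0 k x \<in> R" using cpath_gpow unfolding R_def by blast

lemma kap: "q \<in> Y \<Longrightarrow> q = bpow Y \<beta> (kap q) y"
proof -
  assume "q \<in> Y"
  then have "q \<in> borbit Y \<beta> y" using Yorb by simp
  then have "\<exists>k. q = bpow Y \<beta> k y" by (auto simp: borbit_def)
  then show ?thesis unfolding kap_def by (rule someI_ex)
qed

lemma gcls_tword: "gcls m n (tword s L) = Eg \<otimes>\<^bsub>GG\<^esub> bb [^]\<^bsub>GG\<^esub> L \<otimes>\<^bsub>GG\<^esub> inv\<^bsub>GG\<^esub> Eg"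
proof -
  have "gcls m n (tword s L) = gcls m n [(T, s)] \<otimes>\<^bsub>GG\<^esub> (gcls m n (replicate L (B, True)) \<otimes>\<^bsub>GG\<^esub> gcls m n [(T, \<not> s)])"
    unfolding tword_def by (simp only: gcls_app)
  moreover have "gcls m n [(T, \<not> s)] = inv\<^bsub>GG\<^esub> Eg" unfolding Eg_def using gcls_flip[of m n "(T, s)"] by (simp add: flip_def)
  ultimately show ?thesis by (simp add: gcls_replicate Eg_def bb_def BSG.m_assoc)
qed

lemma gam_eq: "gam = C \<otimes>\<^bsub>GG\<^esub> Eg \<otimes>\<^bsub>GG\<^esub> bb [^]\<^bsub>GG\<^esub> (int P) \<otimes>\<^bsub>GG\<^esub> inv\<^bsub>GG\<^esub> Eg \<otimes>\<^bsub>GG\<^esub> inv\<^bsub>GG\<^esub> C"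
  unfolding gam_def gcls_tword by (simp add: int_pow_int BSG.m_assoc)

lemma conj_rel: "Eg \<otimes>\<^bsub>GG\<^esub> bb [^]\<^bsub>GG\<^esub> (k * m') \<otimes>\<^bsub>GG\<^esub> inv\<^bsub>GG\<^esub> Eg = bb [^]\<^bsub>GG\<^esub> (k * n')"
proof -
  define tt where "tt = gcls m n [(T, True)]"
  have tt: "tt \<in> carrier GG" by (simp add: tt_def)
  have rel: "tt \<otimes>\<^bsub>GG\<^esub> bb [^]\<^bsub>GG\<^esub> m \<otimes>\<^bsub>GG\<^esub> inv\<^bsub>GG\<^esub> tt = bb [^]\<^bsub>GG\<^esub> n"
    using relator_grp by (simp add: tt_def bb_def)
  have "Eg \<otimes>\<^bsub>GG\<^esub> bb [^]\<^bsub>GG\<^esub> m' \<otimes>\<^bsub>GG\<^esub> inv\<^bsub>GG\<^esub> Eg = bb [^]\<^bsub>GG\<^esub> n'"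
  proof (cases s)
    case True
    then have "Eg = tt" "m' = m" "n' = n" unfolding Eg_def tt_def m'_def n'_def by simp_all
    then show ?thesis using rel by simp
  next
    case False
    then have e: "Eg = inv\<^bsub>GG\<^esub> tt" "m' = n" "n' = m" unfolding Eg_def tt_def m'_def n'_def
      using gcls_false by simp_all
    have "inv\<^bsub>GG\<^esub> tt \<otimes>\<^bsub>GG\<^esub> bb [^]\<^bsub>GG\<^esub> n \<otimes>\<^bsub>GG\<^esub> tt
        = inv\<^bsub>GG\<^esub> tt \<otimes>\<^bsub>GG\<^esub> (tt \<otimes>\<^bsub>GG\<^esub> bb [^]\<^bsub>GG\<^esub> m \<otimes>\<^bsub>GG\<^esub> inv\<^bsub>GG\<^esub> tt) \<otimes>\<^bsub>GG\<^esub> tt"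
      using rel by simp
    also have "\<dots> = bb [^]\<^bsub>GG\<^esub> m" using tt by (simp add: BSG.m_assoc)
    finally show ?thesis using e tt by simp
  qed
  then show ?thesis using BSG.alg_conj_pow[of Eg m n bb m' n' k] by simp
qed

end

context bsx begin

lemma K2: assumes p: "p \<in> R" and st: "step X0 \<beta>0 \<tau>0 p l = Some q"
  shows "cond p l q \<in> Stab0"
proof -
  have q: "q \<in> R" using R_step[OF p st] .
  have f: "follow X0 \<beta>0 \<tau>0 x0 (dp p @ [l] @ winv (dp q)) = Some x0"
    using dp[OF p] st follow_rev[OF bij0 inj0 dp[OF q]] by (simp add: follow_app)
  have "gcls m n (dp p @ [l] @ winv (dp q)) = cond p l q"
    unfolding cond_def sig_R[OF p] sig_R[OF q] using gcls_app[of m n "[l]" "winv (dp q)"]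
    by (simp add: gcls_app inv_BS BSG.m_assoc)
  then show ?thesis using f unfolding Stab_def by force
qed

lemma cond_flip: "cond q (flip l) p = inv\<^bsub>GG\<^esub> (cond p l q)"
  unfolding cond_def gcls_flip by (simp add: BSG.inv_mult_group BSG.m_assoc)

lemma cond_flipH: "subgroup H GG \<Longrightarrow> cond p l q \<in> H \<Longrightarrow> cond q (flip l) p \<in> H"
  unfolding cond_flip by (rule subgroup.m_inv_closed)

lemma K3: assumes H: "subgroup H GG" and gH: "gam \<in> H" and p: "p \<in> Y"
  shows "cond p (B, True) (\<beta> p) \<in> H"
proof -
  have q: "\<beta> p \<in> Y" using f_in[OF bijY p] .
  have "\<beta> p = bpow Y \<beta> (kap p + 1) y" using kap[OF p] bpow_succ[OF bijY yY] by simp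
  also have "\<beta> p = bpow Y \<beta> (kap (\<beta> p)) y" using kap[OF q] .
  finally have "int P dvd (kap (\<beta> p) - (kap p + 1))"
    using period_lemma[OF bijY yY] by (simp add: P_def)
  then obtain i where i: "kap (\<beta> p) - (kap p + 1) = int P * i" by (rule dvdE)
  then have k: "kap p + 1 = kap (\<beta> p) + (-i) * int P" by (simp add: algebra_simps)
  have "cond p (B, True) (\<beta> p) = gam [^]\<^bsub>GG\<^esub> (-i)"
    unfolding cond_def sig_Y[OF p] sig_Y[OF q] gam_eq bb_def[symmetric]
    using BSG.alg_K3[OF C_c Eg_c bb_c k] .
  then show ?thesis using BSG.subgroup_int_pow_closed[OF H gH] by simp
qed

lemma K4: assumes H: "subgroup H GG" and sH: "Stab0 \<subseteq> H" and gH: "gam \<in> H"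
  shows "cond (bpow X0 \<beta>0 (j * n') x) (T, s) (bpow Y \<beta> (j * m') y) \<in> H"
proof -
  define p where "p = bpow X0 \<beta>0 (j * n') x"
  define q where "q = bpow Y \<beta> (j * m') y"
  have pR: "p \<in> R" unfolding p_def by (rule bpow_R)
  have qY: "q \<in> Y" unfolding q_def by (rule bpowY_in)
  define h where "h = gcls m n (dp p) \<otimes>\<^bsub>GG\<^esub> inv\<^bsub>GG\<^esub> (C \<otimes>\<^bsub>GG\<^esub> bb [^]\<^bsub>GG\<^esub> (j * n'))"
  have "follow X0 \<beta>0 \<tau>0 x0 (dp p @ winv (c @ gpow B (j * n'))) = Some x0"
    using dp[OF pR] follow_rev[OF bij0 inj0 cpath_gpow[of "j * n'"]] by (simp add: follow_app p_def)
  moreover have "gcls m n (dp p @ winv (c @ gpow B (j * n'))) = h"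
    unfolding h_def by (simp add: gcls_app inv_BS[symmetric] gcls_gpow C_def bb_def BSG.inv_mult_group)
  ultimately have hS: "h \<in> Stab0" unfolding Stab_def by force
  have "bpow Y \<beta> (kap q) y = q" using kap[OF qY] by simp
  also have "q = bpow Y \<beta> (j * m') y" by (simp add: q_def)
  finally have "int P dvd (kap q - j * m')" using period_lemma[OF bijY yY, of "kap q" "j * m'"] P_def by simp
  then obtain i where "kap q - j * m' = int P * i" by (rule dvdE)
  then have k: "kap q = j * m' + i * int P" by (simp add: algebra_simps)
  have "cond p (T, s) q = h \<otimes>\<^bsub>GG\<^esub> gam [^]\<^bsub>GG\<^esub> (-i)"
    unfolding cond_def sig_R[OF pR] sig_Y[OF qY] gam_eq h_def Eg_def[symmetric]
    using BSG.alg_K4[OF C_c Eg_c bb_c gcls_carrier conj_rel k] .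
  moreover have "h \<otimes>\<^bsub>GG\<^esub> gam [^]\<^bsub>GG\<^esub> (-i) \<in> H"
    using hS sH BSG.subgroup_int_pow_closed[OF H gH] subgroup.m_closed[OF H] by blast
  ultimately show ?thesis unfolding p_def q_def by simp
qed

end

context bsx begin

lemma oldH: assumes sH: "Stab0 \<subseteq> H" and p: "p \<in> R" and st: "step X0 \<beta>0 \<tau>0 p l = Some q"
  shows "(q \<in> R \<or> q \<in> Y) \<and> cond p l q \<in> H"
  using R_step[OF p st] K2[OF p st] sH by blast

lemma EDGE: assumes H: "subgroup H GG" and sH: "Stab0 \<subseteq> H" and gH: "gam \<in> H"
  and p: "p \<in> R \<or> p \<in> Y" and st: "step X \<beta> \<tau> p l = Some q"
  shows "(q \<in> R \<or> q \<in> Y) \<and> cond p l q \<in> H"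
proof -
  obtain g b where l: "l = (g, b)" by (cases l)
  have pR: "p \<in> X0 \<Longrightarrow> p \<in> R" using p disj by blast
  show ?thesis
  proof (cases g)
    case B
    show ?thesis
    proof (cases b)
      case True
      then have st': "p \<in> X \<and> q = \<beta> p" using st l B by (simp split: if_splits)
      show ?thesis
      proof (cases "p \<in> Y")
        case True
        then show ?thesis using st' K3[OF H gH True] f_in[OF bijY True] l B \<open>b\<close> by simp
      next
        case False
        then have "p \<in> R" using p by simp
        then have "p \<in> X0" by (rule R_X0)
        then have "step X0 \<beta>0 \<tau>0 p l = Some q" using st' l B \<open>b\<close> beq by simp
        then show ?thesis using oldH[OF sH \<open>p \<in> R\<close>] by blast
      qed
    next
      case False
      then have st': "q \<in> X \<and> p = \<beta> q" using st l B step_BF[OF bijX] by simp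
      show ?thesis
      proof (cases "q \<in> Y")
        case True
        have "cond q (B, True) (\<beta> q) \<in> H" by (rule K3[OF H gH True])
        then have "cond (\<beta> q) (flip (B, True)) q \<in> H" by (rule cond_flipH[OF H])
        then show ?thesis using st' True l B \<open>\<not> b\<close> by (simp add: flip_def)
      next
        case False
        then have qX0: "q \<in> X0" using st' Xdef by simp
        then have "p = \<beta>0 q" using st' beq by simp
        then have "p \<in> X0" using f_in[OF bij0 qX0] by simp
        then have "p \<in> R" by (rule pR)
        have "step X0 \<beta>0 \<tau>0 p l = Some q" using step_BF[OF bij0] qX0 \<open>p = \<beta>0 q\<close> l B \<open>\<not> b\<close> by simp
        then show ?thesis using oldH[OF sH \<open>p \<in> R\<close>] by blast
      qed
    qed
  next
    case T
    show ?thesis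
    proof (cases b)
      case True
      then have "\<tau> p = Some q" using st l T by simp
      then have tp: "\<tau>0 p = Some q \<or> (if s then NewE p q else NewE q p)" using tau_iff by simp
      show ?thesis
      proof (cases "\<tau>0 p = Some q")
        case True
        then have "p \<in> X0" using dom0 by blast
        then have "p \<in> R" by (rule pR)
        have "step X0 \<beta>0 \<tau>0 p l = Some q" using True l T \<open>b\<close> by simp
        then show ?thesis using oldH[OF sH \<open>p \<in> R\<close>] by blast
      next
        case False
        show ?thesis
        proof (cases s)
          case True
          then have "NewE p q" using tp False by simp
          then obtain j where pq: "p = bpow X0 \<beta>0 (j * n') x" "q = bpow Y \<beta> (j * m') y" unfolding NewE_def by blast
          have "cond p (T, s) q \<in> H" using K4[OF H sH gH, of j] pq by simp
          then show ?thesis using pq bpowY_in l T \<open>b\<close> True by simp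
        next
          case False
          then have "NewE q p" using tp \<open>\<tau>0 p \<noteq> Some q\<close> by simp
          then obtain j where pq: "q = bpow X0 \<beta>0 (j * n') x" "p = bpow Y \<beta> (j * m') y" unfolding NewE_def by blast
          have "cond q (T, s) p \<in> H" using K4[OF H sH gH, of j] pq by simp
          then have "cond p (flip (T, s)) q \<in> H" by (rule cond_flipH[OF H])
          then show ?thesis using pq bpow_R l T \<open>b\<close> False by (simp add: flip_def)
        qed
      qed
    next
      case False
      then have "\<tau> q = Some p" using st l T step_TF[OF inj_tau] by simp
      then have tq: "\<tau>0 q = Some p \<or> (if s then NewE q p else NewE p q)" using tau_iff by simp
      show ?thesis
      proof (cases "\<tau>0 q = Some p")
        case True
        then have "p \<in> X0" using ran0 by (auto simp: ran_def)
        then have "p \<in> R" by (rule pR)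
        have "step X0 \<beta>0 \<tau>0 p l = Some q" using True l T \<open>\<not> b\<close> step_TF[OF inj0] by simp
        then show ?thesis using oldH[OF sH \<open>p \<in> R\<close>] by blast
      next
        case False
        show ?thesis
        proof (cases s)
          case True
          then have "NewE q p" using tq False by simp
          then obtain j where pq: "q = bpow X0 \<beta>0 (j * n') x" "p = bpow Y \<beta> (j * m') y" unfolding NewE_def by blast
          have "cond q (T, s) p \<in> H" using K4[OF H sH gH, of j] pq by simp
          then have "cond p (flip (T, s)) q \<in> H" by (rule cond_flipH[OF H])
          then show ?thesis using pq bpow_R l T \<open>\<not> b\<close> True by (simp add: flip_def)
        next
          case False
          then have "NewE p q" using tq \<open>\<tau>0 q \<noteq> Some p\<close> by simp
          then obtain j where pq: "p = bpow X0 \<beta>0 (j * n') x" "q = bpow Y \<beta> (j * m') y" unfolding NewE_def by blast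
          have "cond p (T, s) q \<in> H" using K4[OF H sH gH, of j] pq by simp
          then show ?thesis using pq bpowY_in l T \<open>\<not> b\<close> False by simp
        qed
      qed
    qed
  qed
qed

lemma PATH: assumes H: "subgroup H GG" and sH: "Stab0 \<subseteq> H" and gH: "gam \<in> H"
  shows "p \<in> R \<or> p \<in> Y \<Longrightarrow> follow X \<beta> \<tau> p w = Some q \<Longrightarrow>
     sig p \<otimes>\<^bsub>GG\<^esub> gcls m n w \<otimes>\<^bsub>GG\<^esub> inv\<^bsub>GG\<^esub> sig q \<in> H"
proof (induction w arbitrary: p)
  case Nil
  then have "q = p" by simp
  then show ?case using subgroup.one_closed[OF H] by (simp add: gcls_Nil)
next
  case (Cons a w)
  then obtain p' where st: "step X \<beta> \<tau> p a = Some p'" and f: "follow X \<beta> \<tau> p' w = Some q"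
    by (auto split: option.splits)
  have e: "(p' \<in> R \<or> p' \<in> Y) \<and> cond p a p' \<in> H" using EDGE[OF H sH gH Cons.prems(1) st] .
  have ih: "sig p' \<otimes>\<^bsub>GG\<^esub> gcls m n w \<otimes>\<^bsub>GG\<^esub> inv\<^bsub>GG\<^esub> sig q \<in> H" using Cons.IH e f by blast
  have "sig p \<otimes>\<^bsub>GG\<^esub> gcls m n (a # w) \<otimes>\<^bsub>GG\<^esub> inv\<^bsub>GG\<^esub> sig q
      = cond p a p' \<otimes>\<^bsub>GG\<^esub> (sig p' \<otimes>\<^bsub>GG\<^esub> gcls m n w \<otimes>\<^bsub>GG\<^esub> inv\<^bsub>GG\<^esub> sig q)"
    unfolding cond_def using gcls_app[of m n "[a]" w] by (simp add: BSG.m_assoc)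
  then show ?case using e ih subgroup.m_closed[OF H] by simp
qed

lemma MAIN_SUB: assumes H: "subgroup H GG" and sH: "Stab0 \<subseteq> H" and gH: "gam \<in> H"
  shows "Stab m n X \<beta> \<tau> x0 \<subseteq> H"
proof
  fix g assume "g \<in> Stab m n X \<beta> \<tau> x0"
  then obtain w where g: "g = gcls m n w" and f: "follow X \<beta> \<tau> x0 w = Some x0" by (auto simp: Stab_def)
  have a: "sig x0 \<otimes>\<^bsub>GG\<^esub> g \<otimes>\<^bsub>GG\<^esub> inv\<^bsub>GG\<^esub> sig x0 \<in> H" using PATH[OF H sH gH _ f] x0R g by simp
  have "sig x0 \<in> Stab0" unfolding sig_R[OF x0R] Stab_def using dp[OF x0R] by blast
  then have s: "sig x0 \<in> H" using sH by blast
  have "g = inv\<^bsub>GG\<^esub> sig x0 \<otimes>\<^bsub>GG\<^esub> (sig x0 \<otimes>\<^bsub>GG\<^esub> g \<otimes>\<^bsub>GG\<^esub> inv\<^bsub>GG\<^esub> sig x0) \<otimes>\<^bsub>GG\<^esub> sig x0"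
    using g by (simp add: BSG.m_assoc)
  then show "g \<in> H" using a s subgroup.m_closed[OF H] subgroup.m_inv_closed[OF H] by metis
qed

end

context bsx begin

lemma lift_step: assumes st: "step X0 \<beta>0 \<tau>0 p l = Some q" shows "step X \<beta> \<tau> p l = Some q"
proof -
  obtain g b where l: "l = (g, b)" by (cases l)
  show ?thesis
  proof (cases g)
    case B
    show ?thesis
    proof (cases b)
      case True
      then have "p \<in> X0 \<and> q = \<beta>0 p" using st l B by (simp split: if_splits)
      then show ?thesis using l B True beq Xdef by simp
    next
      case False
      then have "q \<in> X0 \<and> p = \<beta>0 q" using st l B step_BF[OF bij0] by simp
      then have "q \<in> X \<and> p = \<beta> q" using beq Xdef by simp
      then show ?thesis using l B False step_BF[OF bijX] by simp
    qed
  next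
    case T
    show ?thesis
    proof (cases b)
      case True
      then have "\<tau>0 p = Some q" using st l T by simp
      then have "\<tau> p = Some q" using tau_iff by simp
      then show ?thesis using l T True by simp
    next
      case False
      then have "\<tau>0 q = Some p" using st l T step_TF[OF inj0] by simp
      then have "\<tau> q = Some p" using tau_iff by simp
      then show ?thesis using l T False step_TF[OF inj_tau] by simp
    qed
  qed
qed

lemma lift_follow: "follow X0 \<beta>0 \<tau>0 p w = Some q \<Longrightarrow> follow X \<beta> \<tau> p w = Some q"
proof (induction w arbitrary: p)
  case Nil then show ?case by simp
next
  case (Cons a w)
  then obtain p' where st: "step X0 \<beta>0 \<tau>0 p a = Some p'" and f: "follow X0 \<beta>0 \<tau>0 p' w = Some q"
    by (auto split: option.splits)
  then show ?case using lift_step[OF st] Cons.IH[OF f] by simp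
qed

lemma Stab0_sub: "Stab0 \<subseteq> Stab m n X \<beta> \<tau> x0"
  unfolding Stab_def using lift_follow by blast

lemma follow_rep: "z \<in> Y \<Longrightarrow> follow X \<beta> \<tau> z (replicate k (B, True)) = Some ((\<beta> ^^ k) z)"
proof (induction k arbitrary: z)
  case 0 then show ?case by simp
next
  case (Suc k)
  then have "z \<in> X" "\<beta> z \<in> Y" using Xdef f_in[OF bijY] by auto
  then show ?case using Suc by (simp add: funpow_swap1)
qed

lemma loopY: "(\<beta> ^^ P) y = y"
proof -
  have "(\<beta> ^^ P) y = bpow Y \<beta> (int P) y" by (simp add: bpow_def)
  also have "\<dots> = bpow Y \<beta> 0 y" using period_lemma[OF bijY yY, of "int P" 0] by (simp add: P_def)
  finally show ?thesis by simp
qed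

lemma tword_loop: "follow X \<beta> \<tau> x (tword s P) = Some x"
proof -
  have ne: "NewE x y" unfolding NewE_def by (rule exI[of _ 0]) simp
  have s1: "step X \<beta> \<tau> x (T, s) = Some y"
  proof (cases s)
    case True then show ?thesis using ne tau_iff[of x y] by simp
  next
    case False then show ?thesis using ne tau_iff[of y x] step_TF[OF inj_tau] by simp
  qed
  have s2: "step X \<beta> \<tau> y (T, \<not> s) = Some x"
  proof (cases s)
    case True then show ?thesis using ne tau_iff[of x y] step_TF[OF inj_tau] by simp
  next
    case False then show ?thesis using ne tau_iff[of y x] by simp
  qed
  have "follow X \<beta> \<tau> y (replicate P (B, True) @ [(T, \<not> s)]) = Some x"
    using follow_rep[OF yY, of P] loopY s2 by (simp add: follow_app)
  then show ?thesis unfolding tword_def using s1 by simp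
qed

lemma gam_Stab: "gam \<in> Stab m n X \<beta> \<tau> x0"
proof -
  have c1: "follow X \<beta> \<tau> x0 c = Some x" using lift_follow[OF cpath] .
  have "follow X \<beta> \<tau> x0 (c @ tword s P @ winv c) = Some x0"
    using c1 tword_loop follow_rev[OF bijX inj_tau c1] by (simp add: follow_app)
  moreover have "gcls m n (c @ tword s P @ winv c) = gam"
    unfolding gam_def C_def by (simp add: gcls_app inv_BS BSG.m_assoc)
  ultimately show ?thesis unfolding Stab_def by force
qed

lemma gam_inf: "infinite Y \<Longrightarrow> gam \<in> Stab0"
proof -
  assume "infinite Y"
  then have "P = 0" by (simp add: P_def2)
  then have "gam = \<one>\<^bsub>GG\<^esub>" unfolding gam_eq by (simp add: BSG.m_assoc)
  then show ?thesis using subgroup.one_closed[OF Stab_subgroup[OF bij0 inj0]] by simp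
qed

lemma gam_max: assumes fin: "finite Y"
  and mx: "maximal_ext m n s (ecard (borbit X0 \<beta>0 x)) (ecard Y)"
  shows "gam \<in> Stab0"
proof -
  have eY: "ecard Y = enat P" using fin by (simp add: ecard_def P_def2)
  obtain a where a: "ecard (borbit X0 \<beta>0 x) = enat a"
    and Pa: "ecard Y = enat (nat (\<bar>m'\<bar> * int a div gcd (int a) n'))"
    using mx eY unfolding maximal_ext_def m'_def n'_def by (cases s) auto
  have Pa': "P = nat (\<bar>m'\<bar> * int a div gcd (int a) n')" using Pa eY by simp
  note fa = ecard_enat[OF a]
  have La: "La = a" using fa by (simp add: La_def per_def)
  define g where "g = gcd (int a) n'"
  have ga: "g dvd int a" by (simp add: g_def)
  have gn: "g dvd n'" by (simp add: g_def)
  define k where "k = (if m' \<ge> 0 then int a div g else - (int a div g))"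
  have "\<bar>m'\<bar> * int a div g = \<bar>m'\<bar> * (int a div g)" using div_mult_swap[OF ga, of "\<bar>m'\<bar>"] by simp
  moreover have "int a div g \<ge> 0" unfolding g_def by (rule pos_imp_zdiv_nonneg_iff[THEN iffD2]) (use mn0 in auto)
  ultimately have Pk: "int P = k * m'" unfolding Pa' g_def[symmetric] k_def by (simp add: abs_if)
  have e1: "int a * (n' div g) = int a * n' div g" using div_mult_swap[OF gn] by simp
  have e2: "n' * (int a div g) = n' * int a div g" using div_mult_swap[OF ga] by simp
  have "(int a div g) * n' = int a * (n' div g)" using e1 e2 by (simp add: mult.commute)
  then have d0: "int a dvd (int a div g) * n'" by simp
  have dv: "int La dvd k * n'" unfolding La k_def using d0 by auto
  have "gam = C \<otimes>\<^bsub>GG\<^esub> (Eg \<otimes>\<^bsub>GG\<^esub> bb [^]\<^bsub>GG\<^esub> (k * m') \<otimes>\<^bsub>GG\<^esub> inv\<^bsub>GG\<^esub> Eg) \<otimes>\<^bsub>GG\<^esub> inv\<^bsub>GG\<^esub> C"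
    unfolding gam_eq Pk by (simp add: BSG.m_assoc)
  also have "\<dots> = C \<otimes>\<^bsub>GG\<^esub> bb [^]\<^bsub>GG\<^esub> (k * n') \<otimes>\<^bsub>GG\<^esub> inv\<^bsub>GG\<^esub> C" using conj_rel by simp
  also have "\<dots> = gcls m n (c @ gpow B (k * n') @ winv c)"
    by (simp add: gcls_app inv_BS gcls_gpow C_def bb_def BSG.m_assoc)
  finally have ge: "gam = gcls m n (c @ gpow B (k * n') @ winv c)" .
  have "bpow X0 \<beta>0 (k * n') x = bpow X0 \<beta>0 0 x"
    using period_lemma[OF bij0 xX0, of "k * n'" 0] dv by (simp add: La_def)
  then have "follow X0 \<beta>0 \<tau>0 x0 (c @ gpow B (k * n')) = Some x" using cpath_gpow by simp
  then have "follow X0 \<beta>0 \<tau>0 x0 ((c @ gpow B (k * n')) @ winv c) = Some x0"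
    using follow_rev[OF bij0 inj0 cpath] by (rule follow_app_Some)
  then have "follow X0 \<beta>0 \<tau>0 x0 (c @ gpow B (k * n') @ winv c) = Some x0" by simp
  then show ?thesis unfolding Stab_def ge by blast
qed

end

theorem mainTheorem11:
  fixes m n :: int and r :: "enat \<Rightarrow> bool \<Rightarrow> enat"
    and X0 X Y :: "'a set" and \<beta>0 \<beta> :: "'a \<Rightarrow> 'a" and \<tau>0 \<tau> :: "'a \<rightharpoonup> 'a"
    and x y x0 :: 'a and s :: bool and c :: word
  assumes "\<bar>m\<bar> \<ge> 2" and "\<bar>n\<bar> \<ge> 2"
    and "transfer_rule m n r"
    and "pre_action m n X0 \<beta>0 \<tau>0" and "\<not> saturated X0 \<tau>0"
    and "x \<in> X0"
    and "one_orbit_free_ext m n r X0 \<beta>0 \<tau>0 x X \<beta> \<tau> Y y s"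
    and "x0 \<in> X0"
    and "follow X0 \<beta>0 \<tau>0 x0 c = Some x"
  shows "(\<forall>Ly. ecard Y = enat Ly \<longrightarrow>
            Stab m n X \<beta> \<tau> x0 =
              generate (BS m n) (Stab m n X0 \<beta>0 \<tau>0 x0 \<union>
                {gcls m n c \<otimes>\<^bsub>BS m n\<^esub> gcls m n (tword s Ly) \<otimes>\<^bsub>BS m n\<^esub> inv\<^bsub>BS m n\<^esub> (gcls m n c)}))
       \<and> ((ecard Y = \<infinity> \<or> maximal_ext m n s (ecard (borbit X0 \<beta>0 x)) (ecard Y)) \<longrightarrow>
            Stab m n X \<beta> \<tau> x0 = Stab m n X0 \<beta>0 \<tau>0 x0)"
proof -
  interpret B: bsx m n r X0 X Y \<beta>0 \<beta> \<tau>0 \<tau> x y x0 s c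
    using assms by unfold_locales
  have S0: "subgroup (Stab m n X0 \<beta>0 \<tau>0 x0) (BS m n)" by (rule Stab_subgroup[OF B.bij0 B.inj0])
  have S: "subgroup (Stab m n X \<beta> \<tau> x0) (BS m n)" by (rule Stab_subgroup[OF B.bijX B.inj_tau])
  have part1: "Stab m n X \<beta> \<tau> x0 =
              generate (BS m n) (Stab m n X0 \<beta>0 \<tau>0 x0 \<union>
                {gcls m n c \<otimes>\<^bsub>BS m n\<^esub> gcls m n (tword s Ly) \<otimes>\<^bsub>BS m n\<^esub> inv\<^bsub>BS m n\<^esub> (gcls m n c)})"
    if eY: "ecard Y = enat Ly" for Ly
  proof -
    have fY: "finite Y" "card Y = Ly" using ecard_enat[OF eY] by auto
    have "B.P = Ly" using fY by (simp add: B.P_def2)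
    then have ge: "gcls m n c \<otimes>\<^bsub>BS m n\<^esub> gcls m n (tword s Ly) \<otimes>\<^bsub>BS m n\<^esub> inv\<^bsub>BS m n\<^esub> (gcls m n c) = B.gam"
      by (simp add: B.gam_def B.C_def)
    define K where "K = Stab m n X0 \<beta>0 \<tau>0 x0 \<union> {B.gam}"
    have Kc: "K \<subseteq> carrier (BS m n)" unfolding K_def using subgroup.subset[OF S0] by simp
    have H: "subgroup (generate (BS m n) K) (BS m n)" by (rule BSG.generate_is_subgroup[OF Kc])
    have inc: "K \<subseteq> generate (BS m n) K" using generate.incl[of _ K "BS m n"] by blast
    have "Stab m n X \<beta> \<tau> x0 \<subseteq> generate (BS m n) K"
      by (rule B.MAIN_SUB[OF H]) (use inc in \<open>auto simp: K_def\<close>)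
    moreover have "generate (BS m n) K \<subseteq> Stab m n X \<beta> \<tau> x0"
      by (rule BSG.generate_subgroup_incl[OF _ S]) (use B.Stab0_sub B.gam_Stab in \<open>auto simp: K_def\<close>)
    ultimately show ?thesis unfolding ge K_def by blast
  qed
  have part2: "Stab m n X \<beta> \<tau> x0 = Stab m n X0 \<beta>0 \<tau>0 x0"
    if h: "ecard Y = \<infinity> \<or> maximal_ext m n s (ecard (borbit X0 \<beta>0 x)) (ecard Y)"
  proof -
    have g: "B.gam \<in> Stab m n X0 \<beta>0 \<tau>0 x0"
    proof (cases "finite Y")
      case True
      then have "ecard Y \<noteq> \<infinity>" using ecard_inf by blast
      then have "maximal_ext m n s (ecard (borbit X0 \<beta>0 x)) (ecard Y)" using h by (elim disjE) simp_all
      then show ?thesis by (rule B.gam_max[OF True])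
    next
      case False then show ?thesis by (rule B.gam_inf)
    qed
    have "Stab m n X \<beta> \<tau> x0 \<subseteq> Stab m n X0 \<beta>0 \<tau>0 x0" by (rule B.MAIN_SUB[OF S0 _ g]) simp
    then show ?thesis using B.Stab0_sub by blast
  qed
  show ?thesis using part1 part2 by blast
qed


end
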